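(* For each $N\ge1$ let $\eta^N(t)$ be an irreducible continuous-time Markov chain on a finite set $\Omega_N$ with jump rates $R_N(\eta,\xi)$ and unique stationary distribution $\nu_N$; let $A_N\subset\Omega_N$ with $\lim_N\nu_N(A_N)=0$, $H_N=\inf\{t>0:\eta^N(t)\in A_N\}$, and assume $T^{\rm mix}_N\ll r_N(A_N^c,A_N)^{-1}$. Let $\mu_N$ be probability measures on $\Omega_N$ and suppose there is a sequence $S_N$ with $T^{\rm mix}_N\ll S_N\ll\mathbb E_{\nu_N}[H_N]$ such that $\lim_{N\to\infty}\mathbb P_{\mu_N}[H_N<S_N]=0$. Then, under $\mathbb P_{\mu_N}$, $H_N/\mathbb E_{\nu_N}[H_N]$ converges in distribution to a mean one exponential random variable.
   Context: $T^{\rm mix}_N=\inf\{t>0:\max_{\eta}\|P_t(\eta,\cdot)-\nu_N\|_{\rm TV}\le1/4\}$ where $P_t(\eta,\xi)=\mathbb P_\eta[\eta^N(t)=\xi]$. $R_N(\xi,A_N)=\sum_{\zeta\in A_N}R_N(\xi,\zeta)$, $r_N(A_N^c,A_N)=\frac1{\nu_N(A_N^c)}\sum_{\xi\in A_N^c}\nu_N(\xi)R_N(\xi,A_N)$. $a_N\ll b_N$ means $a_N/b_N\to0$. $\mathbb P_\mu,\mathbb E_\mu$ refer to the chain started from the distribution $\mu$. *)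

theory Defs
  imports "HOL-Probability.Probability"
begin

text \<open>Continuous-time Markov chains on a finite state space \<open>\<Omega>\<close> with jump rates \<open>R x y\<close>
  (for \<open>x \<noteq> y\<close>), described through their transition semigroup \<open>exp(t L)\<close>.\<close>

definition gen :: "'a set \<Rightarrow> ('a \<Rightarrow> 'a \<Rightarrow> real) \<Rightarrow> 'a \<Rightarrow> 'a \<Rightarrow> real" where
  "gen \<Omega> R x y = (if x = y then - (\<Sum>z\<in>\<Omega> - {x}. R x z) else R x y)"

fun mpow :: "'a set \<Rightarrow> ('a \<Rightarrow> 'a \<Rightarrow> real) \<Rightarrow> nat \<Rightarrow> 'a \<Rightarrow> 'a \<Rightarrow> real" where
  "mpow S Q 0 x y = (if x = y then 1 else 0)"
| "mpow S Q (Suc k) x y = (\<Sum>z\<in>S. Q x z * mpow S Q k z y)"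

definition mexp :: "'a set \<Rightarrow> ('a \<Rightarrow> 'a \<Rightarrow> real) \<Rightarrow> real \<Rightarrow> 'a \<Rightarrow> 'a \<Rightarrow> real" where
  "mexp S Q t x y = (\<Sum>k. t ^ k / fact k * mpow S Q k x y)"

text \<open>\<open>P_t(\<eta>,\<xi>) = P_\<eta>[\<eta>(t) = \<xi>]\<close>.\<close>
definition trans_prob :: "'a set \<Rightarrow> ('a \<Rightarrow> 'a \<Rightarrow> real) \<Rightarrow> real \<Rightarrow> 'a \<Rightarrow> 'a \<Rightarrow> real" where
  "trans_prob \<Omega> R t x y = mexp \<Omega> (gen \<Omega> R) t x y"

definition tv_dist :: "'a set \<Rightarrow> ('a \<Rightarrow> real) \<Rightarrow> ('a \<Rightarrow> real) \<Rightarrow> real" where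
  "tv_dist \<Omega> p q = (1/2) * (\<Sum>x\<in>\<Omega>. \<bar>p x - q x\<bar>)"

definition mixing_time :: "'a set \<Rightarrow> ('a \<Rightarrow> 'a \<Rightarrow> real) \<Rightarrow> ('a \<Rightarrow> real) \<Rightarrow> real" where
  "mixing_time \<Omega> R \<nu> =
     Inf {t. t > 0 \<and> (\<forall>\<eta>\<in>\<Omega>. tv_dist \<Omega> (trans_prob \<Omega> R t \<eta>) \<nu> \<le> 1/4)}"

text \<open>\<open>P_x[H_A > t]\<close> for \<open>H_A = inf{t>0. \<eta>(t) \<in> A}\<close>: zero if started in \<open>A\<close>
  (then \<open>H_A = 0\<close>), otherwise given by the semigroup of the chain killed upon entering \<open>A\<close>.\<close>
definition surv :: "'a set \<Rightarrow> ('a \<Rightarrow> 'a \<Rightarrow> real) \<Rightarrow> 'a set \<Rightarrow> 'a \<Rightarrow> real \<Rightarrow> real" where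
  "surv \<Omega> R A x t =
     (if t < 0 then 1 else if x \<in> A then 0
      else (\<Sum>y\<in>\<Omega> - A. mexp (\<Omega> - A) (gen \<Omega> R) t x y))"

definition hit_cdf :: "'a set \<Rightarrow> ('a \<Rightarrow> 'a \<Rightarrow> real) \<Rightarrow> 'a set \<Rightarrow> ('a \<Rightarrow> real) \<Rightarrow> real \<Rightarrow> real" where
  "hit_cdf \<Omega> R A \<mu> t = (\<Sum>x\<in>\<Omega>. \<mu> x * (1 - surv \<Omega> R A x t))"

text \<open>\<open>P_\<mu>[H_A < s]\<close> (left limit of the distribution function).\<close>
definition hit_lt :: "'a set \<Rightarrow> ('a \<Rightarrow> 'a \<Rightarrow> real) \<Rightarrow> 'a set \<Rightarrow> ('a \<Rightarrow> real) \<Rightarrow> real \<Rightarrow> real" where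
  "hit_lt \<Omega> R A \<mu> s = (SUP t\<in>{..<s}. hit_cdf \<Omega> R A \<mu> t)"

definition mean_hit :: "'a set \<Rightarrow> ('a \<Rightarrow> 'a \<Rightarrow> real) \<Rightarrow> 'a set \<Rightarrow> ('a \<Rightarrow> real) \<Rightarrow> real" where
  "mean_hit \<Omega> R A \<nu> = (\<Sum>x\<in>\<Omega>. \<nu> x * integral {0..} (surv \<Omega> R A x))"

definition escape_rate :: "'a set \<Rightarrow> ('a \<Rightarrow> 'a \<Rightarrow> real) \<Rightarrow> 'a set \<Rightarrow> ('a \<Rightarrow> real) \<Rightarrow> real" where
  "escape_rate \<Omega> R A \<nu> =
     (1 / (\<Sum>x\<in>\<Omega> - A. \<nu> x)) * (\<Sum>\<xi>\<in>\<Omega> - A. \<nu> \<xi> * (\<Sum>\<zeta>\<in>A. R \<xi> \<zeta>))"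

definition irreducible :: "'a set \<Rightarrow> ('a \<Rightarrow> 'a \<Rightarrow> real) \<Rightarrow> bool" where
  "irreducible \<Omega> R \<longleftrightarrow>
     (\<forall>x\<in>\<Omega>. \<forall>y\<in>\<Omega>. (x, y) \<in> {(u, v). u \<in> \<Omega> \<and> v \<in> \<Omega> \<and> u \<noteq> v \<and> R u v > 0}\<^sup>*)"

definition prob_on :: "'a set \<Rightarrow> ('a \<Rightarrow> real) \<Rightarrow> bool" where
  "prob_on \<Omega> \<mu> \<longleftrightarrow> (\<forall>x\<in>\<Omega>. \<mu> x \<ge> 0) \<and> (\<Sum>x\<in>\<Omega>. \<mu> x) = 1"

definition stationary :: "'a set \<Rightarrow> ('a \<Rightarrow> 'a \<Rightarrow> real) \<Rightarrow> ('a \<Rightarrow> real) \<Rightarrow> bool" where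
  "stationary \<Omega> R \<nu> \<longleftrightarrow> prob_on \<Omega> \<nu> \<and> (\<forall>y\<in>\<Omega>. (\<Sum>x\<in>\<Omega>. \<nu> x * gen \<Omega> R x y) = 0)"

end

theory Submission
  imports Defs
begin

definition qn :: "'a set \<Rightarrow> ('a \<Rightarrow> 'a \<Rightarrow> real) \<Rightarrow> real" where
  "qn S Q = 1 + (\<Sum>u\<in>S. \<Sum>v\<in>S. \<bar>Q u v\<bar>)"

lemma qn_ge1: "finite S \<Longrightarrow> qn S Q \<ge> 1"
  unfolding qn_def by (auto intro!: sum_nonneg)

lemma row_le_qn:
  assumes "finite S" "x \<in> S"
  shows "(\<Sum>z\<in>S. \<bar>Q x z\<bar>) \<le> qn S Q"
proof -
  have "(\<Sum>z\<in>S. \<bar>Q x z\<bar>) \<le> (\<Sum>u\<in>S. \<Sum>v\<in>S. \<bar>Q u v\<bar>)"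
    using assms by (intro member_le_sum) (auto intro!: sum_nonneg)
  then show ?thesis unfolding qn_def by simp
qed

lemma mpow_bound:
  assumes "finite S" "x \<in> S" "y \<in> S"
  shows "\<bar>mpow S Q k x y\<bar> \<le> qn S Q ^ k"
  using assms(2)
proof (induction k arbitrary: x)
  case 0 then show ?case by simp
next
  case (Suc k)
  have "\<bar>mpow S Q (Suc k) x y\<bar> \<le> (\<Sum>z\<in>S. \<bar>Q x z\<bar> * \<bar>mpow S Q k z y\<bar>)"
    unfolding mpow.simps by (rule order_trans[OF sum_abs]) (simp add: abs_mult)
  also have "\<dots> \<le> (\<Sum>z\<in>S. \<bar>Q x z\<bar> * qn S Q ^ k)"
    using Suc.IH by (intro sum_mono mult_left_mono) auto
  also have "\<dots> = (\<Sum>z\<in>S. \<bar>Q x z\<bar>) * qn S Q ^ k"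
    by (simp add: sum_distrib_right)
  also have "\<dots> \<le> qn S Q * qn S Q ^ k"
  proof -
    have "0 \<le> qn S Q ^ k" using qn_ge1[OF assms(1), of Q] by simp
    then show ?thesis using row_le_qn[OF assms(1) Suc.prems] by (intro mult_right_mono) auto
  qed
  finally show ?case by simp
qed

lemma summable_mexp_abs:
  assumes "finite S" "x \<in> S" "y \<in> S"
  shows "summable (\<lambda>k. \<bar>t ^ k / fact k * mpow S Q k x y\<bar>)"
proof -
  have b: "norm \<bar>t ^ n / fact n * mpow S Q n x y\<bar> \<le> inverse (fact n) * (\<bar>t\<bar> * qn S Q) ^ n" for n
  proof -
    have "\<bar>t ^ n / fact n * mpow S Q n x y\<bar> = inverse (fact n) * (\<bar>t\<bar> ^ n * \<bar>mpow S Q n x y\<bar>)"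
      by (simp add: abs_mult power_abs divide_inverse)
    also have "\<dots> \<le> inverse (fact n) * (\<bar>t\<bar> ^ n * qn S Q ^ n)"
      using mpow_bound[OF assms, of Q n] by (intro mult_left_mono) auto
    also have "\<dots> = inverse (fact n) * (\<bar>t\<bar> * qn S Q) ^ n"
      by (simp only: power_mult_distrib)
    finally show ?thesis by (simp only: real_norm_def abs_abs)
  qed
  show ?thesis
    by (rule summable_comparison_test'[OF summable_exp[of "\<bar>t\<bar> * qn S Q"] b])
qed

lemma summable_mexp:
  assumes "finite S" "x \<in> S" "y \<in> S"
  shows "summable (\<lambda>k. t ^ k / fact k * mpow S Q k x y)"
  by (rule summable_rabs_cancel[OF summable_mexp_abs[OF assms]])

lemma mexp_sums:
  assumes "finite S" "x \<in> S" "y \<in> S"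
  shows "(\<lambda>k. t ^ k / fact k * mpow S Q k x y) sums mexp S Q t x y"
  unfolding mexp_def using summable_mexp[OF assms] by (simp add: summable_sums)

lemma mpow_add:
  assumes "finite S" "x \<in> S"
  shows "mpow S Q (i + j) x y = (\<Sum>z\<in>S. mpow S Q i x z * mpow S Q j z y)"
  using assms(2)
proof (induction i arbitrary: x)
  case 0
  have "(\<Sum>z\<in>S. mpow S Q 0 x z * mpow S Q j z y) = (\<Sum>z\<in>S. if z = x then mpow S Q j x y else 0)"
    by (intro sum.cong) auto
  also have "\<dots> = mpow S Q j x y" using 0 assms(1) by simp
  finally show ?case by simp
next
  case (Suc i)
  have "mpow S Q (Suc i + j) x y = (\<Sum>w\<in>S. Q x w * (\<Sum>z\<in>S. mpow S Q i w z * mpow S Q j z y))"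
    using Suc.IH by simp
  also have "\<dots> = (\<Sum>w\<in>S. \<Sum>z\<in>S. Q x w * mpow S Q i w z * mpow S Q j z y)"
    by (simp add: sum_distrib_left mult.assoc)
  also have "\<dots> = (\<Sum>z\<in>S. \<Sum>w\<in>S. Q x w * mpow S Q i w z * mpow S Q j z y)"
    by (rule sum.swap)
  also have "\<dots> = (\<Sum>z\<in>S. mpow S Q (Suc i) x z * mpow S Q j z y)"
    by (simp add: sum_distrib_right)
  finally show ?case .
qed

lemma mexp_add:
  assumes S: "finite S" and x: "x \<in> S" and y: "y \<in> S"
  shows "mexp S Q (s + t) x y = (\<Sum>z\<in>S. mexp S Q s x z * mexp S Q t z y)"
proof -
  define a where "a z i = s ^ i / fact i * mpow S Q i x z" for z i
  define b where "b z i = t ^ i / fact i * mpow S Q i z y" for z i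
  have cp: "(\<lambda>n. \<Sum>i\<le>n. a z i * b z (n - i)) sums (mexp S Q s x z * mexp S Q t z y)" if "z \<in> S" for z
  proof -
    have "(\<lambda>n. \<Sum>i\<le>n. a z i * b z (n - i)) sums ((\<Sum>k. a z k) * (\<Sum>k. b z k))"
      using summable_mexp_abs[OF S x that] summable_mexp_abs[OF S that y]
      by (intro Cauchy_product_sums) (auto simp: a_def b_def)
    then show ?thesis by (simp add: a_def b_def mexp_def)
  qed
  have "(\<lambda>n. \<Sum>z\<in>S. \<Sum>i\<le>n. a z i * b z (n - i)) sums (\<Sum>z\<in>S. mexp S Q s x z * mexp S Q t z y)"
    by (rule sums_sum) (rule cp)
  moreover have "(\<Sum>z\<in>S. \<Sum>i\<le>n. a z i * b z (n - i)) = (s + t) ^ n / fact n * mpow S Q n x y" for n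
  proof -
    have "(\<Sum>z\<in>S. \<Sum>i\<le>n. a z i * b z (n - i))
        = (\<Sum>i\<le>n. \<Sum>z\<in>S. a z i * b z (n - i))" by (rule sum.swap)
    also have "\<dots> = (\<Sum>i\<le>n. (s ^ i * t ^ (n - i) / (fact i * fact (n - i))) *
                        (\<Sum>z\<in>S. mpow S Q i x z * mpow S Q (n - i) z y))"
      by (intro sum.cong refl) (simp add: a_def b_def sum_distrib_left mult_ac)
    also have "\<dots> = (\<Sum>i\<le>n. (s ^ i * t ^ (n - i) / (fact i * fact (n - i))) * mpow S Q n x y)"
      by (intro sum.cong refl) (simp add: mpow_add[OF S x, symmetric])
    also have "\<dots> = (\<Sum>i\<le>n. of_nat (n choose i) * s ^ i * t ^ (n - i)) / fact n * mpow S Q n x y"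
    proof -
      have "s ^ i * t ^ (n - i) / (fact i * fact (n - i)) = of_nat (n choose i) * s ^ i * t ^ (n - i) / fact n"
        if "i \<le> n" for i
        using that by (simp add: binomial_fact field_simps)
      then show ?thesis
        by (simp add: sum_distrib_right sum_divide_distrib)
    qed
    also have "\<dots> = (s + t) ^ n / fact n * mpow S Q n x y"
      by (simp add: binomial_ring)
    finally show ?thesis .
  qed
  ultimately have "(\<lambda>n. (s + t) ^ n / fact n * mpow S Q n x y) sums (\<Sum>z\<in>S. mexp S Q s x z * mexp S Q t z y)"
    by simp
  with mexp_sums[OF S x y, of "s + t" Q] show ?thesis
    using sums_unique2 by blast
qed


lemma binom_shift:
  fixes a :: "nat \<Rightarrow> real"
  shows "(\<Sum>i\<le>n. of_nat (n choose i) * c ^ (n - i) * a (Suc i)) + c * (\<Sum>i\<le>n. of_nat (n choose i) * c ^ (n - i) * a i)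
       = (\<Sum>i\<le>Suc n. of_nat (Suc n choose i) * c ^ (Suc n - i) * a i)"
proof -
  have r1: "(\<Sum>i\<le>Suc n. of_nat (Suc n choose i) * c ^ (Suc n - i) * a i)
      = c ^ Suc n * a 0 + (\<Sum>i\<le>n. of_nat (Suc n choose Suc i) * c ^ (n - i) * a (Suc i))"
    by (subst sum.atMost_Suc_shift) simp
  have r2: "(\<Sum>i\<le>n. of_nat (Suc n choose Suc i) * c ^ (n - i) * a (Suc i))
      = (\<Sum>i\<le>n. of_nat (n choose i) * c ^ (n - i) * a (Suc i)) + (\<Sum>i\<le>n. of_nat (n choose Suc i) * c ^ (n - i) * a (Suc i))"
    by (simp only: binomial_Suc_Suc of_nat_add distrib_right sum.distrib)
  have r3: "c ^ Suc n * a 0 + (\<Sum>i\<le>n. of_nat (n choose Suc i) * c ^ (n - i) * a (Suc i))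
      = (\<Sum>i\<le>Suc n. of_nat (n choose i) * c ^ (Suc n - i) * a i)"
    by (subst sum.atMost_Suc_shift) simp
  have r4: "(\<Sum>i\<le>Suc n. of_nat (n choose i) * c ^ (Suc n - i) * a i) = (\<Sum>i\<le>n. of_nat (n choose i) * c ^ (Suc n - i) * a i)"
    by (subst sum.atMost_Suc) simp
  have r5: "(\<Sum>i\<le>n. of_nat (n choose i) * c ^ (Suc n - i) * a i) = c * (\<Sum>i\<le>n. of_nat (n choose i) * c ^ (n - i) * a i)"
    unfolding sum_distrib_left
    by (intro sum.cong refl) (simp add: Suc_diff_le mult_ac)
  show ?thesis using r1 r2 r3 r4 r5 by simp
qed

lemma mpow_shift:
  assumes S: "finite S" and x: "x \<in> S"
  shows "mpow S (\<lambda>u v. Q u v + (if u = v then c else 0)) n x y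
       = (\<Sum>i\<le>n. of_nat (n choose i) * c ^ (n - i) * mpow S Q i x y)"
  using x
proof (induction n arbitrary: x)
  case 0 then show ?case by simp
next
  case (Suc n)
  let ?Q' = "\<lambda>u v. Q u v + (if u = v then c else 0)"
  have "mpow S ?Q' (Suc n) x y = (\<Sum>z\<in>S. Q x z * mpow S ?Q' n z y) + (\<Sum>z\<in>S. (if x = z then c else 0) * mpow S ?Q' n z y)"
    by (simp add: distrib_right sum.distrib)
  also have "(\<Sum>z\<in>S. (if x = z then c else 0) * mpow S ?Q' n z y) = c * mpow S ?Q' n x y"
  proof -
    have "(\<Sum>z\<in>S. (if x = z then c else 0) * mpow S ?Q' n z y) = (\<Sum>z\<in>S. if z = x then c * mpow S ?Q' n x y else 0)"
      by (intro sum.cong) auto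
    then show ?thesis using S Suc.prems by simp
  qed
  also have "(\<Sum>z\<in>S. Q x z * mpow S ?Q' n z y) = (\<Sum>z\<in>S. Q x z * (\<Sum>i\<le>n. of_nat (n choose i) * c ^ (n - i) * mpow S Q i z y))"
    using Suc.IH by (intro sum.cong) auto
  also have "\<dots> = (\<Sum>i\<le>n. of_nat (n choose i) * c ^ (n - i) * mpow S Q (Suc i) x y)"
    by (simp add: sum_distrib_left sum_distrib_right sum.swap[of _ S] mult_ac)
  finally show ?case using Suc.IH[OF Suc.prems] binom_shift[of n c "\<lambda>i. mpow S Q i x y"] by simp
qed

lemma mexp_shift:
  assumes S: "finite S" and x: "x \<in> S" and y: "y \<in> S"
  shows "mexp S (\<lambda>u v. Q u v + (if u = v then c else 0)) t x y = exp (c * t) * mexp S Q t x y"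
proof -
  define a where "a j = t ^ j / fact j * mpow S Q j x y" for j
  define b where "b i = (c * t) ^ i / fact i" for i :: nat
  have sa: "summable (\<lambda>k. norm (a k))"
    using summable_mexp_abs[OF S x y] by (simp add: a_def)
  have sb: "summable (\<lambda>k. norm (b k))"
  proof -
    have "norm (b k) = inverse (fact k) * \<bar>c * t\<bar> ^ k" for k
      by (simp add: b_def abs_mult power_abs divide_inverse power_mult_distrib)
    then show ?thesis using summable_exp[of "\<bar>c * t\<bar>"] by simp
  qed
  have eb: "(\<Sum>k. b k) = exp (c * t)"
  proof -
    have bb: "b = (\<lambda>n. inverse (fact n) * (c * t) ^ n)"
      by (simp add: b_def fun_eq_iff divide_inverse mult.commute)
    have "b sums exp (c * t)"
      unfolding bb using exp_converges[of "c * t"] by (simp add: divide_inverse mult.commute)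
    then show ?thesis by (rule sums_unique[symmetric])
  qed
  have cp: "(\<lambda>n. \<Sum>j\<le>n. a j * b (n - j)) sums ((\<Sum>k. a k) * (\<Sum>k. b k))"
    by (rule Cauchy_product_sums[OF sa sb])
  have "(\<Sum>j\<le>n. a j * b (n - j)) = t ^ n / fact n * mpow S (\<lambda>u v. Q u v + (if u = v then c else 0)) n x y" for n
  proof -
    have "a j * b (n - j) = t ^ n / fact n * (of_nat (n choose j) * c ^ (n - j) * mpow S Q j x y)"
      if "j \<le> n" for j
    proof -
      have tt: "t ^ j * t ^ (n - j) = t ^ n" using that by (simp add: power_add[symmetric])
      have "a j * b (n - j) = (t ^ j * t ^ (n - j)) * c ^ (n - j) * mpow S Q j x y / (fact j * fact (n - j))"
        by (simp add: a_def b_def power_mult_distrib)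
      also have "\<dots> = t ^ n * c ^ (n - j) * mpow S Q j x y / (fact j * fact (n - j))" by (simp only: tt)
      also have "\<dots> = t ^ n / fact n * (of_nat (n choose j) * c ^ (n - j) * mpow S Q j x y)"
        using that by (simp add: binomial_fact field_simps)
      finally show ?thesis .
    qed
    then have "(\<Sum>j\<le>n. a j * b (n - j)) = (\<Sum>j\<le>n. t ^ n / fact n * (of_nat (n choose j) * c ^ (n - j) * mpow S Q j x y))"
      by (intro sum.cong) auto
    also have "\<dots> = t ^ n / fact n * (\<Sum>j\<le>n. of_nat (n choose j) * c ^ (n - j) * mpow S Q j x y)"
      by (simp add: sum_distrib_left)
    finally show ?thesis by (simp only: mpow_shift[OF S x])
  qed
  with cp have "(\<lambda>n. t ^ n / fact n * mpow S (\<lambda>u v. Q u v + (if u = v then c else 0)) n x y) sums (mexp S Q t x y * exp (c * t))"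
    by (simp add: eb a_def mexp_def)
  then show ?thesis
    using mexp_sums[OF S x y, of t "\<lambda>u v. Q u v + (if u = v then c else 0)"] sums_unique2 by (simp add: mult.commute)
qed

lemma mexp_zero:
  assumes S: "finite S" and x: "x \<in> S" and y: "y \<in> S"
  shows "mexp S Q 0 x y = (if x = y then 1 else 0)"
proof -
  have eq: "(\<lambda>k. (0::real) ^ k / fact k * mpow S Q k x y) = (\<lambda>k. if k = 0 then mpow S Q k x y else 0)"
    by auto
  have "(\<lambda>k. (0::real) ^ k / fact k * mpow S Q k x y) sums mpow S Q 0 x y"
    unfolding eq by (rule sums_single)
  then have "mexp S Q 0 x y = mpow S Q 0 x y" using mexp_sums[OF S x y, of 0 Q] sums_unique2 by blast
  then show ?thesis by simp
qed

lemma mpow_nonneg: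
  assumes "\<And>u v. u \<in> S \<Longrightarrow> v \<in> S \<Longrightarrow> Q u v \<ge> 0" "x \<in> S" "y \<in> S"
  shows "mpow S Q k x y \<ge> 0"
  using assms(2)
proof (induction k arbitrary: x)
  case 0 then show ?case by simp
next
  case (Suc k) then show ?case using assms(1) by (auto intro!: sum_nonneg)
qed

lemma mexp_ge_partial:
  assumes S: "finite S" and Q: "\<And>u v. u \<in> S \<Longrightarrow> v \<in> S \<Longrightarrow> Q u v \<ge> 0"
    and x: "x \<in> S" and y: "y \<in> S" and t: "t \<ge> 0" and that: "finite I"
  shows "(\<Sum>k\<in>I. t ^ k / fact k * mpow S Q k x y) \<le> mexp S Q t x y"
  unfolding mexp_def
  by (rule sum_le_suminf[OF summable_mexp[OF S x y] that])
     (use t mpow_nonneg[OF Q x y] in auto)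

lemma mexp_nonneg:
  assumes S: "finite S" and Q: "\<And>u v. u \<in> S \<Longrightarrow> v \<in> S \<Longrightarrow> Q u v \<ge> 0"
    and x: "x \<in> S" and y: "y \<in> S" and t: "t \<ge> 0"
  shows "mexp S Q t x y \<ge> 0"
  using mexp_ge_partial[OF assms finite.emptyI] by simp

lemma mpow_mono_set:
  assumes S: "finite S" and sub: "S' \<subseteq> S" and Q: "\<And>u v. u \<in> S \<Longrightarrow> v \<in> S \<Longrightarrow> Q u v \<ge> 0"
    and x: "x \<in> S'" and y: "y \<in> S'"
  shows "mpow S' Q k x y \<le> mpow S Q k x y"
  using x
proof (induction k arbitrary: x)
  case 0 then show ?case by simp
next
  case (Suc k)
  have fS': "finite S'" using S sub finite_subset by blast
  have xS: "x \<in> S" using Suc.prems sub by blast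
  have "mpow S' Q (Suc k) x y \<le> (\<Sum>z\<in>S'. Q x z * mpow S Q k z y)"
    unfolding mpow.simps
  proof (rule sum_mono)
    fix z assume z: "z \<in> S'"
    then have "Q x z \<ge> 0" using Q[OF xS] sub by blast
    then show "Q x z * mpow S' Q k z y \<le> Q x z * mpow S Q k z y"
      using Suc.IH[OF z] by (rule mult_left_mono[rotated])
  qed
  also have "\<dots> \<le> (\<Sum>z\<in>S. Q x z * mpow S Q k z y)"
    using sub Q Suc.prems y mpow_nonneg[of S Q _ y k] S
    by (intro sum_mono2) (auto intro!: mult_nonneg_nonneg)
  finally show ?case by simp
qed

lemma mexp_mono_set:
  assumes S: "finite S" and sub: "S' \<subseteq> S" and Q: "\<And>u v. u \<in> S \<Longrightarrow> v \<in> S \<Longrightarrow> Q u v \<ge> 0"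
    and x: "x \<in> S'" and y: "y \<in> S'" and t: "t \<ge> 0"
  shows "mexp S' Q t x y \<le> mexp S Q t x y"
proof -
  have fS': "finite S'" using S sub finite_subset by blast
  have xS: "x \<in> S" "y \<in> S" using x y sub by auto
  have "t ^ k / fact k * mpow S' Q k x y \<le> t ^ k / fact k * mpow S Q k x y" for k
    using mpow_mono_set[OF S sub Q x y, where k=k] t by (intro mult_left_mono) auto
  then show ?thesis unfolding mexp_def
    by (rule suminf_le[OF _ summable_mexp[OF fS' x y] summable_mexp[OF S xS]])
qed

locale chain =
  fixes \<Omega> :: "'a set" and R :: "'a \<Rightarrow> 'a \<Rightarrow> real" and \<nu> :: "'a \<Rightarrow> real" and A :: "'a set"
  assumes fin: "finite \<Omega>"
    and rates: "\<And>x y. x \<in> \<Omega> \<Longrightarrow> y \<in> \<Omega> \<Longrightarrow> x \<noteq> y \<Longrightarrow> R x y \<ge> 0"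
    and irr: "irreducible \<Omega> R"
    and stat: "stationary \<Omega> R \<nu>"
    and A_sub: "A \<subseteq> \<Omega>" and A_ne: "A \<noteq> {}"
begin

abbreviation "L \<equiv> gen \<Omega> R"
abbreviation "B \<equiv> \<Omega> - A"
definition "cc = (\<Sum>u\<in>\<Omega>. \<Sum>v\<in>\<Omega> - {u}. R u v)"
definition "M u v = L u v + (if u = v then cc else 0)"
abbreviation "P t x y \<equiv> trans_prob \<Omega> R t x y"
abbreviation "K t x y \<equiv> mexp B L t x y"
definition "\<rho> x = (\<Sum>z\<in>A. R x z)"

lemma finB: "finite B" using fin by simp
lemma B_sub: "B \<subseteq> \<Omega>" by blast

lemma exit_le_cc: "u \<in> \<Omega> \<Longrightarrow> (\<Sum>v\<in>\<Omega> - {u}. R u v) \<le> cc"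
  unfolding cc_def using fin rates by (intro member_le_sum) (auto intro!: sum_nonneg)

lemma cc_nonneg: "cc \<ge> 0"
  unfolding cc_def using fin rates by (auto intro!: sum_nonneg)

lemma M_nonneg: "u \<in> \<Omega> \<Longrightarrow> v \<in> \<Omega> \<Longrightarrow> M u v \<ge> 0"
  using exit_le_cc[of u] rates[of u v] by (auto simp: M_def gen_def)

lemma P_eq: assumes "x \<in> \<Omega>" "y \<in> \<Omega>" shows "P t x y = exp (- (cc * t)) * mexp \<Omega> M t x y"
  using mexp_shift[OF fin assms, where Q=L and c=cc and t=t]
  by (simp add: trans_prob_def M_def[abs_def] exp_minus field_simps)

lemma K_eq: assumes "x \<in> B" "y \<in> B" shows "K t x y = exp (- (cc * t)) * mexp B M t x y"
  using mexp_shift[OF finB assms, where Q=L and c=cc and t=t]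
  by (simp add: M_def[abs_def] exp_minus field_simps)

lemma P_nonneg: "x \<in> \<Omega> \<Longrightarrow> y \<in> \<Omega> \<Longrightarrow> t \<ge> 0 \<Longrightarrow> P t x y \<ge> 0"
  using mexp_nonneg[OF fin M_nonneg, where x=x and y=y and t=t] by (simp add: P_eq)

lemma K_nonneg: "x \<in> B \<Longrightarrow> y \<in> B \<Longrightarrow> t \<ge> 0 \<Longrightarrow> K t x y \<ge> 0"
  using mexp_nonneg[OF finB, where Q=M and x=x and y=y and t=t] M_nonneg by (simp add: K_eq)

lemma K_le_P: "x \<in> B \<Longrightarrow> y \<in> B \<Longrightarrow> t \<ge> 0 \<Longrightarrow> K t x y \<le> P t x y"
  using mexp_mono_set[OF fin B_sub M_nonneg, where x=x and y=y and t=t] by (simp add: K_eq P_eq)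

lemma gen_rowsum: "x \<in> \<Omega> \<Longrightarrow> (\<Sum>y\<in>\<Omega>. L x y) = 0"
proof -
  assume x: "x \<in> \<Omega>"
  have "(\<Sum>y\<in>\<Omega>. L x y) = L x x + (\<Sum>y\<in>\<Omega> - {x}. L x y)"
    using x fin by (simp add: sum.remove)
  also have "(\<Sum>y\<in>\<Omega> - {x}. L x y) = (\<Sum>y\<in>\<Omega> - {x}. R x y)"
    by (intro sum.cong) (auto simp: gen_def)
  finally show ?thesis by (simp add: gen_def)
qed

lemma mpow_rowsum: "x \<in> \<Omega> \<Longrightarrow> (\<Sum>y\<in>\<Omega>. mpow \<Omega> L k x y) = (if k = 0 then 1 else 0)"
proof (induction k arbitrary: x)
  case 0 then show ?case using fin by simp
next
  case (Suc k)
  have "(\<Sum>y\<in>\<Omega>. mpow \<Omega> L (Suc k) x y) = (\<Sum>z\<in>\<Omega>. L x z * (\<Sum>y\<in>\<Omega>. mpow \<Omega> L k z y))"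
    by (simp add: sum_distrib_left) (rule sum.swap)
  also have "\<dots> = (\<Sum>z\<in>\<Omega>. L x z * (if k = 0 then 1 else 0))"
    using Suc.IH by (intro sum.cong) auto
  also have "\<dots> = 0" using gen_rowsum[OF Suc.prems] by (cases "k = 0") auto
  finally show ?case by simp
qed

lemma P_rowsum: "x \<in> \<Omega> \<Longrightarrow> (\<Sum>y\<in>\<Omega>. P t x y) = 1"
proof -
  assume x: "x \<in> \<Omega>"
  have s: "(\<lambda>k. \<Sum>y\<in>\<Omega>. t ^ k / fact k * mpow \<Omega> L k x y) sums (\<Sum>y\<in>\<Omega>. mexp \<Omega> L t x y)"
    by (rule sums_sum) (rule mexp_sums[OF fin x])
  have eq: "(\<lambda>k. \<Sum>y\<in>\<Omega>. t ^ k / fact k * mpow \<Omega> L k x y) = (\<lambda>k. if k = 0 then 1 else 0)"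
  proof
    fix k
    show "(\<Sum>y\<in>\<Omega>. t ^ k / fact k * mpow \<Omega> L k x y) = (if k = 0 then 1 else 0)"
    proof -
      have "(\<Sum>y\<in>\<Omega>. t ^ k / fact k * mpow \<Omega> L k x y) = t ^ k / fact k * (\<Sum>y\<in>\<Omega>. mpow \<Omega> L k x y)"
        by (rule sum_distrib_left[symmetric])
      then show ?thesis using mpow_rowsum[OF x, of k] by simp
    qed
  qed
  have "(\<lambda>k::nat. if k = 0 then (1::real) else 0) sums 1"
    using sums_single[of 0 "\<lambda>_. (1::real)"] by simp
  with s eq show ?thesis unfolding trans_prob_def using sums_unique2 by metis
qed

lemma stat_gen: "y \<in> \<Omega> \<Longrightarrow> (\<Sum>x\<in>\<Omega>. \<nu> x * L x y) = 0"
  using stat by (simp add: stationary_def)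

lemma nu_prob: "prob_on \<Omega> \<nu>" using stat by (simp add: stationary_def)

lemma P_stat: "y \<in> \<Omega> \<Longrightarrow> (\<Sum>x\<in>\<Omega>. \<nu> x * P t x y) = \<nu> y"
proof -
  assume y: "y \<in> \<Omega>"
  have s: "(\<lambda>k. \<Sum>x\<in>\<Omega>. \<nu> x * (t ^ k / fact k * mpow \<Omega> L k x y)) sums (\<Sum>x\<in>\<Omega>. \<nu> x * mexp \<Omega> L t x y)"
    by (rule sums_sum) (rule sums_mult, rule mexp_sums[OF fin _ y])
  have eq: "(\<lambda>k. \<Sum>x\<in>\<Omega>. \<nu> x * (t ^ k / fact k * mpow \<Omega> L k x y)) = (\<lambda>k. if k = 0 then \<nu> y else 0)"
  proof
    fix k
    show "(\<Sum>x\<in>\<Omega>. \<nu> x * (t ^ k / fact k * mpow \<Omega> L k x y)) = (if k = 0 then \<nu> y else 0)"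
    proof (cases k)
      case 0
      have "(\<Sum>x\<in>\<Omega>. \<nu> x * (t ^ k / fact k * mpow \<Omega> L k x y)) = (\<Sum>x\<in>\<Omega>. if x = y then \<nu> y else 0)"
        using 0 by (intro sum.cong) auto
      then show ?thesis using 0 y fin by simp
    next
      case (Suc j)
      have "(\<Sum>x\<in>\<Omega>. \<nu> x * mpow \<Omega> L k x y) = (\<Sum>x\<in>\<Omega>. \<Sum>z\<in>\<Omega>. \<nu> x * L x z * mpow \<Omega> L j z y)"
        using Suc by (simp add: sum_distrib_left mult.assoc)
      also have "\<dots> = (\<Sum>z\<in>\<Omega>. \<Sum>x\<in>\<Omega>. \<nu> x * L x z * mpow \<Omega> L j z y)"
        by (rule sum.swap)
      also have "\<dots> = (\<Sum>z\<in>\<Omega>. (\<Sum>x\<in>\<Omega>. \<nu> x * L x z) * mpow \<Omega> L j z y)"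
        by (simp add: sum_distrib_right)
      also have "\<dots> = 0" using stat_gen by simp
      finally have "(\<Sum>x\<in>\<Omega>. \<nu> x * mpow \<Omega> L k x y) = 0" .
      moreover have "(\<Sum>x\<in>\<Omega>. \<nu> x * (t ^ k / fact k * mpow \<Omega> L k x y)) = t ^ k / fact k * (\<Sum>x\<in>\<Omega>. \<nu> x * mpow \<Omega> L k x y)"
        by (simp add: sum_distrib_left mult_ac)
      ultimately have "(\<Sum>x\<in>\<Omega>. \<nu> x * (t ^ k / fact k * mpow \<Omega> L k x y)) = t ^ k / fact k * 0"
        by simp
      then show ?thesis using Suc by simp
    qed
  qed
  have "(\<lambda>k::nat. if k = 0 then \<nu> y else 0) sums \<nu> y"
    using sums_single[of 0 "\<lambda>_. \<nu> y"] by simp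
  with s eq show ?thesis unfolding trans_prob_def using sums_unique2 by metis
qed

lemma P_semi: "x \<in> \<Omega> \<Longrightarrow> y \<in> \<Omega> \<Longrightarrow> P (s + t) x y = (\<Sum>z\<in>\<Omega>. P s x z * P t z y)"
  unfolding trans_prob_def by (rule mexp_add[OF fin])

lemma K_semi: "x \<in> B \<Longrightarrow> y \<in> B \<Longrightarrow> K (s + t) x y = (\<Sum>z\<in>B. K s x z * K t z y)"
  by (rule mexp_add[OF finB])

lemma P_zero: "x \<in> \<Omega> \<Longrightarrow> y \<in> \<Omega> \<Longrightarrow> P 0 x y = (if x = y then 1 else 0)"
  unfolding trans_prob_def by (rule mexp_zero[OF fin])

lemma K_zero: "x \<in> B \<Longrightarrow> y \<in> B \<Longrightarrow> K 0 x y = (if x = y then 1 else 0)"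
  by (rule mexp_zero[OF finB])


abbreviation "sv x t \<equiv> surv \<Omega> R A x t"

lemma surv_B: "x \<in> B \<Longrightarrow> t \<ge> 0 \<Longrightarrow> sv x t = (\<Sum>y\<in>B. K t x y)"
  by (simp add: surv_def)

lemma surv_A: "x \<in> A \<Longrightarrow> t \<ge> 0 \<Longrightarrow> sv x t = 0"
  by (simp add: surv_def)

lemma surv_neg: "t < 0 \<Longrightarrow> sv x t = 1"
  by (simp add: surv_def)

lemma surv_nonneg: "x \<in> \<Omega> \<Longrightarrow> sv x t \<ge> 0"
  unfolding surv_def using K_nonneg by (auto intro!: sum_nonneg)

lemma Krow_le: assumes x: "x \<in> B" and t: "t \<ge> 0"
  shows "(\<Sum>y\<in>B. K t x y) \<le> 1 - (\<Sum>a\<in>A. P t x a)"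
proof -
  have xO: "x \<in> \<Omega>" using x by blast
  have "(\<Sum>y\<in>B. K t x y) \<le> (\<Sum>y\<in>B. P t x y)"
    using K_le_P x t by (intro sum_mono) auto
  moreover have "(\<Sum>y\<in>B. P t x y) + (\<Sum>a\<in>A. P t x a) = 1"
    using P_rowsum[OF xO, of t] sum.subset_diff[OF A_sub fin, of "P t x"] by simp
  ultimately show ?thesis by simp
qed

lemma surv_le1: "x \<in> \<Omega> \<Longrightarrow> sv x t \<le> 1"
proof -
  assume x: "x \<in> \<Omega>"
  show ?thesis
  proof (cases "t < 0 \<or> x \<in> A")
    case True then show ?thesis by (auto simp: surv_def)
  next
    case False
    then have xB: "x \<in> B" and t: "t \<ge> 0" using x by auto
    have "(\<Sum>a\<in>A. P t x a) \<ge> 0" using P_nonneg t x A_sub by (auto intro!: sum_nonneg)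
    then show ?thesis using Krow_le[OF xB t] surv_B[OF xB t] by simp
  qed
qed

lemma surv_semi: assumes x: "x \<in> B" and t: "t \<ge> 0" and s: "s \<ge> 0"
  shows "sv x (t + s) = (\<Sum>y\<in>B. K t x y * sv y s)"
proof -
  have "sv x (t + s) = (\<Sum>w\<in>B. \<Sum>y\<in>B. K t x y * K s y w)"
    using surv_B[OF x] t s K_semi[OF x] by simp
  also have "\<dots> = (\<Sum>y\<in>B. \<Sum>w\<in>B. K t x y * K s y w)" by (rule sum.swap)
  also have "\<dots> = (\<Sum>y\<in>B. K t x y * sv y s)"
    using surv_B s by (simp add: sum_distrib_left)
  finally show ?thesis .
qed

lemma surv_zero: "x \<in> B \<Longrightarrow> sv x 0 = 1"
proof -
  assume x: "x \<in> B"
  have "sv x 0 = (\<Sum>y\<in>B. if y = x then 1 else 0)"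
    using surv_B[OF x, of 0] K_zero[OF x] by (auto intro!: sum.cong)
  then show ?thesis using x finB by simp
qed

lemma surv_mono: assumes x: "x \<in> \<Omega>" and t: "0 \<le> t" and tt: "t \<le> t'"
  shows "sv x t' \<le> sv x t"
proof (cases "x \<in> A")
  case True then show ?thesis using t tt by (simp add: surv_A)
next
  case False
  then have xB: "x \<in> B" using x by blast
  have "sv x t' = (\<Sum>y\<in>B. K t x y * sv y (t' - t))" using surv_semi[OF xB t, of "t' - t"] tt by simp
  also have "\<dots> \<le> (\<Sum>y\<in>B. K t x y * 1)"
    using K_nonneg[OF xB _ t] surv_le1 by (intro sum_mono mult_left_mono) auto
  also have "\<dots> = sv x t" using surv_B[OF xB t] by simp
  finally show ?thesis .
qed

lemma rho_nonneg: "x \<in> B \<Longrightarrow> \<rho> x \<ge> 0"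
  unfolding \<rho>_def using rates A_sub by (auto intro!: sum_nonneg)

lemma genB_rowsum: assumes x: "x \<in> B" shows "(\<Sum>y\<in>B. L x y) = - \<rho> x"
proof -
  have xO: "x \<in> \<Omega>" and xA: "x \<notin> A" using x by auto
  have "(\<Sum>y\<in>B. L x y) = L x x + (\<Sum>y\<in>B - {x}. L x y)"
    using x finB by (simp add: sum.remove)
  also have "(\<Sum>y\<in>B - {x}. L x y) = (\<Sum>y\<in>B - {x}. R x y)"
    by (intro sum.cong) (auto simp: gen_def)
  also have "(\<Sum>z\<in>\<Omega> - {x}. R x z) = (\<Sum>y\<in>B - {x}. R x y) + \<rho> x"
  proof -
    have "\<Omega> - {x} = (B - {x}) \<union> A" using A_sub xA by blast
    moreover have "(B - {x}) \<inter> A = {}" by blast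
    ultimately show ?thesis unfolding \<rho>_def using fin A_sub finite_subset[OF A_sub fin]
      by (simp add: sum.union_disjoint)
  qed
  then have "L x x = - (\<Sum>y\<in>B - {x}. R x y) - \<rho> x" by (simp add: gen_def)
  finally show ?thesis by simp
qed

lemma surv_small: assumes x: "x \<in> B" and h: "h \<ge> 0"
  shows "sv x h \<ge> 1 - h * \<rho> x - cc\<^sup>2 * h\<^sup>2"
proof -
  have M0: "\<And>u v. u \<in> B \<Longrightarrow> v \<in> B \<Longrightarrow> M u v \<ge> 0" using M_nonneg by auto
  have trm: "(if x = y then 1 else 0) + h * M x y \<le> mexp B M h x y" if y: "y \<in> B" for y
  proof -
    have m1: "mpow B M 1 x y = M x y"
    proof -
      have "mpow B M 1 x y = (\<Sum>z\<in>B. if z = y then M x y else 0)"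
        unfolding One_nat_def mpow.simps by (intro sum.cong) auto
      then show ?thesis using y finB by simp
    qed
    have "(\<Sum>k\<in>{0,1::nat}. h ^ k / fact k * mpow B M k x y) \<le> mexp B M h x y"
      by (rule mexp_ge_partial) (use finB M0 x y h in auto)
    then show ?thesis using m1 by simp
  qed
  have "(\<Sum>y\<in>B. (if x = y then 1 else 0) + h * M x y) = 1 + h * (\<Sum>y\<in>B. M x y)"
    using x finB by (simp add: sum.distrib sum_distrib_left)
  also have "(\<Sum>y\<in>B. M x y) = cc - \<rho> x"
  proof -
    have "(\<Sum>y\<in>B. M x y) = (\<Sum>y\<in>B. L x y) + (\<Sum>y\<in>B. if x = y then cc else 0)"
      unfolding M_def by (simp add: sum.distrib)
    also have "(\<Sum>y\<in>B. if x = y then cc else 0) = cc" using x finB by simp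
    finally show ?thesis using genB_rowsum[OF x] by simp
  qed
  finally have s1: "1 + h * (cc - \<rho> x) \<le> (\<Sum>y\<in>B. mexp B M h x y)"
    using trm by (metis (no_types, lifting) sum_mono)
  have "sv x h = exp (- (cc * h)) * (\<Sum>y\<in>B. mexp B M h x y)"
    using surv_B[OF x h] K_eq[OF x] by (simp add: sum_distrib_left)
  also have "\<dots> \<ge> exp (- (cc * h)) * (1 + h * (cc - \<rho> x))"
    using s1 by (intro mult_left_mono) auto
  finally have s2: "sv x h \<ge> exp (- (cc * h)) * (1 + cc * h) - exp (- (cc * h)) * (h * \<rho> x)"
    by (simp add: algebra_simps)
  have e1: "exp (- (cc * h)) \<ge> 1 - cc * h" using exp_ge_add_one_self[of "- (cc * h)"] by simp
  have e2: "exp (- (cc * h)) \<le> 1" using cc_nonneg h by simp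
  have hr: "h * \<rho> x \<ge> 0" using rho_nonneg[OF x] h by simp
  have ch: "1 + cc * h \<ge> 0" using cc_nonneg h by simp
  have "exp (- (cc * h)) * (1 + cc * h) \<ge> (1 - cc * h) * (1 + cc * h)"
    using e1 ch by (rule mult_right_mono)
  moreover have "exp (- (cc * h)) * (h * \<rho> x) \<le> h * \<rho> x"
    using e2 hr by (simp add: mult_left_le_one_le)
  ultimately show ?thesis using s2 by (simp add: power2_eq_square algebra_simps)
qed

lemma path_pos:
  assumes "(x, y) \<in> {(u, v). u \<in> \<Omega> \<and> v \<in> \<Omega> \<and> u \<noteq> v \<and> R u v > 0}\<^sup>*" and y: "y \<in> \<Omega>"
  shows "\<exists>k. mpow \<Omega> M k x y > 0"
  using assms(1)
proof (induction rule: converse_rtrancl_induct)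
  case base
  show ?case by (rule exI[of _ 0]) simp
next
  case (step u w)
  then obtain k where k: "mpow \<Omega> M k w y > 0" by blast
  from step.hyps(1) have u: "u \<in> \<Omega>" and w: "w \<in> \<Omega>" and uw: "u \<noteq> w" and R: "R u w > 0" by auto
  have Mu: "M u w > 0" using uw R by (simp add: M_def gen_def)
  have "M u w * mpow \<Omega> M k w y \<le> (\<Sum>z\<in>\<Omega>. M u z * mpow \<Omega> M k z y)"
    using w fin M_nonneg u mpow_nonneg[of \<Omega> M _ y k] M_nonneg y
    by (intro member_le_sum) (auto intro!: mult_nonneg_nonneg)
  moreover have "M u w * mpow \<Omega> M k w y > 0" using Mu k by simp
  ultimately show ?case by (intro exI[of _ "Suc k"]) simp
qed

lemma P1_pos: "x \<in> \<Omega> \<Longrightarrow> y \<in> \<Omega> \<Longrightarrow> P 1 x y > 0"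
proof -
  assume x: "x \<in> \<Omega>" and y: "y \<in> \<Omega>"
  obtain k where k: "mpow \<Omega> M k x y > 0"
    using path_pos[OF _ y] irr x y unfolding irreducible_def by blast
  have "(\<Sum>j\<in>{k}. 1 ^ j / fact j * mpow \<Omega> M j x y) \<le> mexp \<Omega> M 1 x y"
    by (rule mexp_ge_partial[OF fin M_nonneg x y]) auto
  moreover have "mpow \<Omega> M k x y / fact k > 0" using k by simp
  ultimately have "mexp \<Omega> M 1 x y > 0" by simp
  then show ?thesis using P_eq[OF x y] by simp
qed

lemma P_pos: "\<exists>\<beta>>0. \<forall>x\<in>\<Omega>. \<forall>y\<in>\<Omega>. P 1 x y \<ge> \<beta>"
proof (cases "\<Omega> = {}")
  case True then show ?thesis by (intro exI[of _ 1]) auto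
next
  case False
  let ?V = "(\<lambda>(x, y). P 1 x y) ` (\<Omega> \<times> \<Omega>)"
  have fV: "finite ?V" using fin by simp
  have nV: "?V \<noteq> {}" using False by auto
  have pos: "Min ?V > 0" using fV nV P1_pos by (auto simp: Min_gr_iff)
  have "\<forall>x\<in>\<Omega>. \<forall>y\<in>\<Omega>. Min ?V \<le> P 1 x y"
  proof (intro ballI)
    fix x y assume "x \<in> \<Omega>" "y \<in> \<Omega>"
    then have "P 1 x y \<in> ?V" by (intro image_eqI[where x="(x, y)"]) auto
    then show "Min ?V \<le> P 1 x y" using fV by (rule Min_le[rotated])
  qed
  then show ?thesis using pos by blast
qed

end

lemma tv_test:
  assumes fin: "finite \<Omega>" and eq: "(\<Sum>z\<in>\<Omega>. p z) = (\<Sum>z\<in>\<Omega>. q z)"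
    and g: "\<And>z. z \<in> \<Omega> \<Longrightarrow> 0 \<le> g z \<and> g z \<le> 1"
  shows "\<bar>\<Sum>z\<in>\<Omega>. (p z - q z) * g z\<bar> \<le> tv_dist \<Omega> p q"
proof -
  have "(\<Sum>z\<in>\<Omega>. (p z - q z) * g z) = (\<Sum>z\<in>\<Omega>. (p z - q z) * (g z - 1/2)) + (1/2) * (\<Sum>z\<in>\<Omega>. (p z - q z))"
    by (simp add: sum_distrib_left sum.distrib[symmetric] algebra_simps)
  also have "(\<Sum>z\<in>\<Omega>. (p z - q z)) = 0" using eq by (simp add: sum_subtractf)
  finally have e: "(\<Sum>z\<in>\<Omega>. (p z - q z) * g z) = (\<Sum>z\<in>\<Omega>. (p z - q z) * (g z - 1/2))" by simp
  have "\<bar>\<Sum>z\<in>\<Omega>. (p z - q z) * (g z - 1/2)\<bar> \<le> (\<Sum>z\<in>\<Omega>. \<bar>p z - q z\<bar> * \<bar>g z - 1/2\<bar>)"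
    by (rule order_trans[OF sum_abs]) (simp add: abs_mult)
  also have "\<dots> \<le> (\<Sum>z\<in>\<Omega>. \<bar>p z - q z\<bar> * (1/2))"
  proof (rule sum_mono)
    fix z assume "z \<in> \<Omega>"
    then have "0 \<le> g z" "g z \<le> 1" using g by auto
    then have "\<bar>g z - 1/2\<bar> \<le> 1/2" unfolding abs_le_iff by linarith
    then show "\<bar>p z - q z\<bar> * \<bar>g z - 1/2\<bar> \<le> \<bar>p z - q z\<bar> * (1/2)"
      by (rule mult_left_mono) simp
  qed
  also have "\<dots> = tv_dist \<Omega> p q" unfolding tv_dist_def by (simp add: sum_divide_distrib[symmetric])
  finally show ?thesis using e by simp
qed

lemma tv_nonneg: "tv_dist \<Omega> p q \<ge> 0"
  unfolding tv_dist_def by (auto intro!: sum_nonneg)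

lemma tv_sym: "tv_dist \<Omega> p q = tv_dist \<Omega> q p"
  unfolding tv_dist_def by (simp add: abs_minus_commute)

lemma tv_tri: "tv_dist \<Omega> p q \<le> tv_dist \<Omega> p r + tv_dist \<Omega> r q"
proof -
  have "(\<Sum>x\<in>\<Omega>. \<bar>p x - q x\<bar>) \<le> (\<Sum>x\<in>\<Omega>. \<bar>p x - r x\<bar> + \<bar>r x - q x\<bar>)"
    by (intro sum_mono) simp
  then show ?thesis unfolding tv_dist_def by (simp add: sum.distrib)
qed

lemma dobrushin:
  fixes lam :: "'a \<Rightarrow> real" and Pm :: "'a \<Rightarrow> 'a \<Rightarrow> real"
  assumes fin: "finite \<Omega>" and s0: "(\<Sum>y\<in>\<Omega>. lam y) = 0"
    and th: "\<And>x y. x \<in> \<Omega> \<Longrightarrow> y \<in> \<Omega> \<Longrightarrow> tv_dist \<Omega> (Pm x) (Pm y) \<le> \<theta>"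
  shows "(\<Sum>z\<in>\<Omega>. \<bar>\<Sum>y\<in>\<Omega>. lam y * Pm y z\<bar>) \<le> \<theta> * (\<Sum>y\<in>\<Omega>. \<bar>lam y\<bar>)"
proof -
  define pp where "pp y = max (lam y) 0" for y
  define nn where "nn y = max (- lam y) 0" for y
  define m where "m = (\<Sum>y\<in>\<Omega>. pp y)"
  have lm: "lam y = pp y - nn y" for y unfolding pp_def nn_def by auto
  have absl: "\<bar>lam y\<bar> = pp y + nn y" for y unfolding pp_def nn_def by auto
  have pp0: "pp y \<ge> 0" and nn0: "nn y \<ge> 0" for y unfolding pp_def nn_def by auto
  have mn: "(\<Sum>y\<in>\<Omega>. nn y) = m"
    using s0 unfolding m_def lm by (simp add: sum_subtractf)
  have sabs: "(\<Sum>y\<in>\<Omega>. \<bar>lam y\<bar>) = 2 * m"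
    unfolding absl using mn m_def by (simp add: sum.distrib)
  have m0: "m \<ge> 0" unfolding m_def using pp0 by (auto intro!: sum_nonneg)
  show ?thesis
  proof (cases "m = 0")
    case True
    then have "pp y = 0" if "y \<in> \<Omega>" for y
      using that fin pp0 unfolding m_def by (simp add: sum_nonneg_eq_0_iff)
    moreover have "nn y = 0" if "y \<in> \<Omega>" for y
      using that fin nn0 mn True by (simp add: sum_nonneg_eq_0_iff)
    ultimately have "lam y = 0" if "y \<in> \<Omega>" for y using lm that by simp
    then show ?thesis by simp
  next
    case False
    then have mpos: "m > 0" using m0 by simp
    have key: "(\<Sum>y\<in>\<Omega>. lam y * Pm y z) = (1/m) * (\<Sum>y\<in>\<Omega>. \<Sum>w\<in>\<Omega>. pp y * nn w * (Pm y z - Pm w z))" for z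
    proof -
      have "(\<Sum>y\<in>\<Omega>. \<Sum>w\<in>\<Omega>. pp y * nn w * (Pm y z - Pm w z))
          = (\<Sum>y\<in>\<Omega>. \<Sum>w\<in>\<Omega>. nn w * (pp y * Pm y z)) - (\<Sum>y\<in>\<Omega>. \<Sum>w\<in>\<Omega>. pp y * (nn w * Pm w z))"
        by (simp add: algebra_simps sum_subtractf)
      also have "(\<Sum>y\<in>\<Omega>. \<Sum>w\<in>\<Omega>. nn w * (pp y * Pm y z)) = m * (\<Sum>y\<in>\<Omega>. pp y * Pm y z)"
        by (simp add: sum_distrib_right[symmetric] mn mult.commute sum_distrib_left)
      also have "(\<Sum>y\<in>\<Omega>. \<Sum>w\<in>\<Omega>. pp y * (nn w * Pm w z)) = m * (\<Sum>w\<in>\<Omega>. nn w * Pm w z)"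
        by (simp add: sum_distrib_left[symmetric] sum_distrib_right[symmetric] m_def)
      finally have "(\<Sum>y\<in>\<Omega>. \<Sum>w\<in>\<Omega>. pp y * nn w * (Pm y z - Pm w z)) = m * (\<Sum>y\<in>\<Omega>. lam y * Pm y z)"
        unfolding lm by (simp add: algebra_simps sum_subtractf)
      then show ?thesis using mpos by simp
    qed
    have "(\<Sum>z\<in>\<Omega>. \<bar>\<Sum>y\<in>\<Omega>. lam y * Pm y z\<bar>)
        \<le> (\<Sum>z\<in>\<Omega>. (1/m) * (\<Sum>y\<in>\<Omega>. \<Sum>w\<in>\<Omega>. pp y * nn w * \<bar>Pm y z - Pm w z\<bar>))"
    proof (rule sum_mono)
      fix z
      have "\<bar>\<Sum>y\<in>\<Omega>. \<Sum>w\<in>\<Omega>. pp y * nn w * (Pm y z - Pm w z)\<bar> \<le> (\<Sum>y\<in>\<Omega>. \<bar>\<Sum>w\<in>\<Omega>. pp y * nn w * (Pm y z - Pm w z)\<bar>)"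
        by (rule sum_abs)
      also have "\<dots> \<le> (\<Sum>y\<in>\<Omega>. \<Sum>w\<in>\<Omega>. \<bar>pp y * nn w * (Pm y z - Pm w z)\<bar>)"
        by (intro sum_mono sum_abs)
      also have "\<dots> = (\<Sum>y\<in>\<Omega>. \<Sum>w\<in>\<Omega>. pp y * nn w * \<bar>Pm y z - Pm w z\<bar>)"
        using pp0 nn0 by (simp add: abs_mult)
      finally show "\<bar>\<Sum>y\<in>\<Omega>. lam y * Pm y z\<bar> \<le> (1/m) * (\<Sum>y\<in>\<Omega>. \<Sum>w\<in>\<Omega>. pp y * nn w * \<bar>Pm y z - Pm w z\<bar>)"
        using mpos by (simp add: key abs_mult divide_right_mono)
    qed
    also have "\<dots> = (1/m) * (\<Sum>y\<in>\<Omega>. \<Sum>w\<in>\<Omega>. pp y * nn w * (\<Sum>z\<in>\<Omega>. \<bar>Pm y z - Pm w z\<bar>))"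
    proof -
      have "(\<Sum>z\<in>\<Omega>. \<Sum>y\<in>\<Omega>. \<Sum>w\<in>\<Omega>. pp y * nn w * \<bar>Pm y z - Pm w z\<bar>)
          = (\<Sum>y\<in>\<Omega>. \<Sum>z\<in>\<Omega>. \<Sum>w\<in>\<Omega>. pp y * nn w * \<bar>Pm y z - Pm w z\<bar>)"
        by (rule sum.swap)
      also have "\<dots> = (\<Sum>y\<in>\<Omega>. \<Sum>w\<in>\<Omega>. \<Sum>z\<in>\<Omega>. pp y * nn w * \<bar>Pm y z - Pm w z\<bar>)"
        by (intro sum.cong refl sum.swap)
      finally have e1: "(\<Sum>z\<in>\<Omega>. \<Sum>y\<in>\<Omega>. \<Sum>w\<in>\<Omega>. pp y * nn w * \<bar>Pm y z - Pm w z\<bar>)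
          = (\<Sum>y\<in>\<Omega>. \<Sum>w\<in>\<Omega>. \<Sum>z\<in>\<Omega>. pp y * nn w * \<bar>Pm y z - Pm w z\<bar>)" .
      have e2: "(\<Sum>y\<in>\<Omega>. \<Sum>w\<in>\<Omega>. pp y * nn w * (\<Sum>z\<in>\<Omega>. \<bar>Pm y z - Pm w z\<bar>))
          = (\<Sum>y\<in>\<Omega>. \<Sum>w\<in>\<Omega>. \<Sum>z\<in>\<Omega>. pp y * nn w * \<bar>Pm y z - Pm w z\<bar>)"
        by (simp add: sum_distrib_left)
      have "(\<Sum>z\<in>\<Omega>. (1/m) * (\<Sum>y\<in>\<Omega>. \<Sum>w\<in>\<Omega>. pp y * nn w * \<bar>Pm y z - Pm w z\<bar>))
          = (1/m) * (\<Sum>z\<in>\<Omega>. \<Sum>y\<in>\<Omega>. \<Sum>w\<in>\<Omega>. pp y * nn w * \<bar>Pm y z - Pm w z\<bar>)"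
        by (rule sum_distrib_left[symmetric])
      then show ?thesis by (simp only: e1 e2)
    qed
    also have "\<dots> \<le> (1/m) * (\<Sum>y\<in>\<Omega>. \<Sum>w\<in>\<Omega>. pp y * nn w * (2 * \<theta>))"
    proof -
      have "(\<Sum>y\<in>\<Omega>. \<Sum>w\<in>\<Omega>. pp y * nn w * (\<Sum>z\<in>\<Omega>. \<bar>Pm y z - Pm w z\<bar>)) \<le> (\<Sum>y\<in>\<Omega>. \<Sum>w\<in>\<Omega>. pp y * nn w * (2 * \<theta>))"
      proof (intro sum_mono mult_left_mono)
        fix y w assume "y \<in> \<Omega>" "w \<in> \<Omega>"
        then show "(\<Sum>z\<in>\<Omega>. \<bar>Pm y z - Pm w z\<bar>) \<le> 2 * \<theta>" using th[of y w] by (simp add: tv_dist_def)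
        show "0 \<le> pp y * nn w" using pp0 nn0 by simp
      qed
      then show ?thesis using mpos by (intro mult_left_mono) auto
    qed
    also have "\<dots> = (1/m) * (m * m * (2 * \<theta>))"
      by (simp add: sum_distrib_right[symmetric] sum_distrib_left[symmetric] m_def mn mult_ac)
    also have "\<dots> = \<theta> * (\<Sum>y\<in>\<Omega>. \<bar>lam y\<bar>)" using mpos sabs by simp
    finally show ?thesis .
  qed
qed

context chain begin

lemma tv_P_le1: "x \<in> \<Omega> \<Longrightarrow> t \<ge> 0 \<Longrightarrow> tv_dist \<Omega> (P t x) \<nu> \<le> 1"
proof -
  assume x: "x \<in> \<Omega>" and t: "t \<ge> 0"
  have "(\<Sum>y\<in>\<Omega>. \<bar>P t x y - \<nu> y\<bar>) \<le> (\<Sum>y\<in>\<Omega>. P t x y + \<nu> y)"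
  proof (rule sum_mono)
    fix y assume y: "y \<in> \<Omega>"
    then have "P t x y \<ge> 0" "\<nu> y \<ge> 0" using P_nonneg[OF x y t] nu_prob by (auto simp: prob_on_def)
    then show "\<bar>P t x y - \<nu> y\<bar> \<le> P t x y + \<nu> y" unfolding abs_le_iff by linarith
  qed
  also have "\<dots> = 2" using P_rowsum[OF x] nu_prob by (simp add: sum.distrib prob_on_def)
  finally show ?thesis by (simp add: tv_dist_def)
qed

lemma mix_comb:
  assumes s: "s \<ge> 0" and t: "t \<ge> 0" and a: "\<And>x. x \<in> \<Omega> \<Longrightarrow> tv_dist \<Omega> (P s x) \<nu> \<le> a"
    and th: "\<And>x y. x \<in> \<Omega> \<Longrightarrow> y \<in> \<Omega> \<Longrightarrow> tv_dist \<Omega> (P t x) (P t y) \<le> \<theta>" and th0: "\<theta> \<ge> 0"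
    and x: "x \<in> \<Omega>"
  shows "tv_dist \<Omega> (P (s + t) x) \<nu> \<le> \<theta> * a"
proof -
  define lam where "lam y = P s x y - \<nu> y" for y
  have s0: "(\<Sum>y\<in>\<Omega>. lam y) = 0"
    using P_rowsum[OF x] nu_prob by (simp add: lam_def sum_subtractf prob_on_def)
  have eq: "P (s + t) x z - \<nu> z = (\<Sum>y\<in>\<Omega>. lam y * P t y z)" if z: "z \<in> \<Omega>" for z
    using P_semi[OF x z, of s t] P_stat[OF z, of t]
    by (simp add: lam_def left_diff_distrib sum_subtractf)
  have "tv_dist \<Omega> (P (s + t) x) \<nu> = (1/2) * (\<Sum>z\<in>\<Omega>. \<bar>\<Sum>y\<in>\<Omega>. lam y * P t y z\<bar>)"
    unfolding tv_dist_def using eq by simp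
  also have "\<dots> \<le> (1/2) * (\<theta> * (\<Sum>y\<in>\<Omega>. \<bar>lam y\<bar>))"
    using dobrushin[OF fin s0, of "P t" \<theta>] th by simp
  also have "\<dots> = \<theta> * tv_dist \<Omega> (P s x) \<nu>" by (simp add: tv_dist_def lam_def)
  also have "\<dots> \<le> \<theta> * a" using a[OF x] th0 by (simp add: mult_left_mono)
  finally show ?thesis .
qed


lemma tv_P_pair: assumes x: "x \<in> \<Omega>" and y: "y \<in> \<Omega>" and t: "t \<ge> 0"
  and b: "\<And>z. z \<in> \<Omega> \<Longrightarrow> P t x z \<ge> \<beta>" "\<And>z. z \<in> \<Omega> \<Longrightarrow> P t y z \<ge> \<beta>"
  shows "tv_dist \<Omega> (P t x) (P t y) \<le> 1 - real (card \<Omega>) * \<beta>"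
proof -
  have "(\<Sum>z\<in>\<Omega>. \<bar>P t x z - P t y z\<bar>) = (\<Sum>z\<in>\<Omega>. P t x z + P t y z - 2 * min (P t x z) (P t y z))"
    by (intro sum.cong refl) (auto simp: min_def)
  also have "\<dots> = 2 - 2 * (\<Sum>z\<in>\<Omega>. min (P t x z) (P t y z))"
    using P_rowsum[OF x] P_rowsum[OF y] by (simp add: sum_subtractf sum.distrib sum_distrib_left)
  finally have e: "(\<Sum>z\<in>\<Omega>. \<bar>P t x z - P t y z\<bar>) = 2 - 2 * (\<Sum>z\<in>\<Omega>. min (P t x z) (P t y z))" .
  have "(\<Sum>z\<in>\<Omega>. min (P t x z) (P t y z)) \<ge> (\<Sum>z\<in>\<Omega>. \<beta>)"
    using b by (intro sum_mono) auto
  then have "(\<Sum>z\<in>\<Omega>. min (P t x z) (P t y z)) \<ge> real (card \<Omega>) * \<beta>" by simp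
  then show ?thesis unfolding tv_dist_def e by simp
qed

lemma ergodic:
  assumes ne: "\<Omega> \<noteq> {}"
  shows "\<exists>\<theta>. 0 \<le> \<theta> \<and> \<theta> < 1 \<and> (\<forall>x\<in>\<Omega>. \<forall>y\<in>\<Omega>. tv_dist \<Omega> (P 1 x) (P 1 y) \<le> \<theta>)"
proof -
  obtain \<beta> where bpos: "\<beta> > 0" and b: "\<forall>x\<in>\<Omega>. \<forall>y\<in>\<Omega>. P 1 x y \<ge> \<beta>" using P_pos by blast
  obtain x0 where x0: "x0 \<in> \<Omega>" using ne by blast
  have "real (card \<Omega>) * \<beta> = (\<Sum>z\<in>\<Omega>. \<beta>)" by simp
  also have "\<dots> \<le> (\<Sum>z\<in>\<Omega>. P 1 x0 z)" using b x0 by (intro sum_mono) auto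
  also have "\<dots> = 1" using P_rowsum[OF x0] .
  finally have le: "real (card \<Omega>) * \<beta> \<le> 1" .
  have cpos: "real (card \<Omega>) > 0" using ne fin by (simp add: card_gt_0_iff)
  show ?thesis
    by (rule exI[of _ "1 - real (card \<Omega>) * \<beta>"])
       (use le cpos bpos tv_P_pair b in \<open>auto intro!: tv_P_pair\<close>)
qed

lemma ergodic_pow:
  assumes th0: "0 \<le> \<theta>" and th: "\<forall>x\<in>\<Omega>. \<forall>y\<in>\<Omega>. tv_dist \<Omega> (P 1 x) (P 1 y) \<le> \<theta>"
  shows "\<forall>x\<in>\<Omega>. tv_dist \<Omega> (P (real k) x) \<nu> \<le> \<theta> ^ k"
proof (induction k)
  case 0 then show ?case using tv_P_le1 by simp
next
  case (Suc k)
  show ?case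
  proof
    fix x assume x: "x \<in> \<Omega>"
    have "tv_dist \<Omega> (P (real k + 1) x) \<nu> \<le> \<theta> * \<theta> ^ k"
      by (rule mix_comb) (use Suc.IH th th0 x in auto)
    then show "tv_dist \<Omega> (P (real (Suc k)) x) \<nu> \<le> \<theta> ^ Suc k" by (simp add: add.commute)
  qed
qed

definition "mixset = {t. t > 0 \<and> (\<forall>\<eta>\<in>\<Omega>. tv_dist \<Omega> (P t \<eta>) \<nu> \<le> 1/4)}"

lemma mixset_ne: assumes ne: "\<Omega> \<noteq> {}" shows "mixset \<noteq> {}"
proof -
  obtain \<theta> where th0: "0 \<le> \<theta>" and th1: "\<theta> < 1" and th: "\<forall>x\<in>\<Omega>. \<forall>y\<in>\<Omega>. tv_dist \<Omega> (P 1 x) (P 1 y) \<le> \<theta>"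
    using ergodic[OF ne] by blast
  have "(\<lambda>k. \<theta> ^ k) \<longlonglongrightarrow> 0" using th0 th1 by (intro LIMSEQ_power_zero) auto
  then have "eventually (\<lambda>k. \<theta> ^ k < 1/4) sequentially" by (rule order_tendstoD) simp
  then obtain k where k: "\<theta> ^ k < 1/4" by (auto simp: eventually_sequentially)
  then have "k \<noteq> 0" by (cases k) auto
  then have "real k \<in> mixset" unfolding mixset_def using ergodic_pow[OF th0 th, of k] k by force
  then show ?thesis by blast
qed

lemma mixing_time_eq: "mixing_time \<Omega> R \<nu> = Inf mixset"
  unfolding mixing_time_def mixset_def trans_prob_def ..

lemma mt_nonneg: assumes ne: "\<Omega> \<noteq> {}" shows "mixing_time \<Omega> R \<nu> \<ge> 0"
  unfolding mixing_time_eq using mixset_ne[OF ne]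
  by (intro cInf_greatest) (auto simp: mixset_def)

lemma mt_approx: assumes ne: "\<Omega> \<noteq> {}" and e: "e > 0"
  shows "\<exists>t\<in>mixset. t < mixing_time \<Omega> R \<nu> + e"
proof -
  have bdd: "bdd_below mixset" unfolding mixset_def by (rule bdd_belowI[of _ 0]) auto
  have "Inf mixset < Inf mixset + e" using e by simp
  then show ?thesis unfolding mixing_time_eq using cInf_less_iff[OF mixset_ne[OF ne] bdd] by blast
qed

lemma mix_power:
  assumes t: "t \<in> mixset"
  shows "\<forall>x\<in>\<Omega>. tv_dist \<Omega> (P (real (Suc k) * t) x) \<nu> \<le> (1/2) ^ (k + 2)"
proof (induction k)
  case 0 then show ?case using t by (simp add: mixset_def power2_eq_square)
next
  case (Suc k)
  have tpos: "t > 0" and tb: "\<And>x. x \<in> \<Omega> \<Longrightarrow> tv_dist \<Omega> (P t x) \<nu> \<le> 1/4" using t by (auto simp: mixset_def)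
  have th: "tv_dist \<Omega> (P t x) (P t y) \<le> 1/2" if "x \<in> \<Omega>" "y \<in> \<Omega>" for x y
    using tv_tri[of \<Omega> "P t x" "P t y" \<nu>] tv_sym[of \<Omega> "P t y" \<nu>] tb[OF that(1)] tb[OF that(2)] by simp
  show ?case
  proof
    fix x assume x: "x \<in> \<Omega>"
    have "tv_dist \<Omega> (P (real (Suc k) * t + t) x) \<nu> \<le> 1/2 * (1/2) ^ (k + 2)"
      by (rule mix_comb) (use Suc.IH th x tpos in auto)
    moreover have "real (Suc (Suc k)) * t = real (Suc k) * t + t" by (simp add: algebra_simps)
    ultimately show "tv_dist \<Omega> (P (real (Suc (Suc k)) * t) x) \<nu> \<le> (1/2) ^ (Suc k + 2)" by simp
  qed
qed

end

definition decr :: "(real \<Rightarrow> real) \<Rightarrow> bool" where "decr f \<longleftrightarrow> (\<forall>s t. 0 \<le> s \<longrightarrow> s \<le> t \<longrightarrow> f t \<le> f s)"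

lemma decrD: "decr f \<Longrightarrow> 0 \<le> s \<Longrightarrow> s \<le> t \<Longrightarrow> f t \<le> f s"
  unfolding decr_def by blast

lemma decr_integrable:
  assumes d: "decr f" and a: "0 \<le> a"
  shows "f integrable_on {a..b}"
proof -
  have "mono_on {a..b} (\<lambda>x. - f x)"
  proof (rule mono_onI)
    fix r s :: real assume "r \<in> {a..b}" "s \<in> {a..b}" "r \<le> s"
    then have "0 \<le> r" "r \<le> s" using a by auto
    then show "- f r \<le> - f s" using decrD[OF d] by auto
  qed
  then have "(\<lambda>x. - f x) integrable_on {a..b}" by (rule integrable_on_mono_on)
  then have "(\<lambda>x. - (- f x)) integrable_on {a..b}" by (rule integrable_neg)
  then show ?thesis by simp
qed

lemma int_piece:
  assumes d: "decr f" and a: "0 \<le> a" and h: "0 \<le> h"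
  shows "integral {a..a + h} f \<le> h * f a" and "integral {a..a + h} f \<ge> h * f (a + h)"
proof -
  have i: "f integrable_on {a..a + h}" using decr_integrable[OF d a] .
  have "integral {a..a + h} f \<le> integral {a..a + h} (\<lambda>x. f a)"
    by (rule integral_le[OF i]) (use a in \<open>auto intro!: decrD[OF d]\<close>)
  then show "integral {a..a + h} f \<le> h * f a" using h by simp
  have "integral {a..a + h} (\<lambda>x. f (a + h)) \<le> integral {a..a + h} f"
    by (rule integral_le[OF _ i]) (use a in \<open>auto intro!: decrD[OF d]\<close>)
  then show "integral {a..a + h} f \<ge> h * f (a + h)" using h by simp
qed

lemma int_steps:
  assumes d: "decr f" and h: "0 \<le> h"
  shows "integral {0..real M * h} f \<le> h * (\<Sum>n<M. f (real n * h))"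
    and "integral {0..real M * h} f \<ge> h * (\<Sum>n<M. f (real (Suc n) * h))"
proof (induction M)
  case 0
  { case 1 show ?case by simp }
  { case 2 show ?case by simp }
next
  case (Suc M)
  have c: "integral {0..real M * h} f + integral {real M * h..real M * h + h} f = integral {0..real M * h + h} f"
    using Henstock_Kurzweil_Integration.integral_combine[where a=0 and c="real M * h" and b="real M * h + h" and f=f] h decr_integrable[OF d, where a=0 and b="real M * h + h"]
    by simp
  have eq: "real (Suc M) * h = real M * h + h" by (simp add: algebra_simps)
  have p1: "integral {real M * h..real M * h + h} f \<le> h * f (real M * h)"
    using int_piece(1)[OF d _ h, of "real M * h"] h by simp
  have p2: "integral {real M * h..real M * h + h} f \<ge> h * f (real M * h + h)"
    using int_piece(2)[OF d _ h, of "real M * h"] h by simp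
  { case 1 show ?case using Suc.IH(1) c p1 unfolding eq by (simp add: distrib_left) }
  { case 2 show ?case using Suc.IH(2) c p2 unfolding eq by (simp add: distrib_left algebra_simps) }
qed

lemma decr_integral:
  assumes d: "decr f" and nn: "\<And>t. t \<ge> 0 \<Longrightarrow> f t \<ge> 0"
    and C: "\<And>k::nat. integral {0..real k} f \<le> C"
  shows "f integrable_on {0..}" and "integral {0..} f \<le> C"
    and "\<And>b. integral {0..b} f \<le> integral {0..} f"
proof -
  define g where "g k x = (if x \<in> {0..real k} then f x else 0)" for k :: nat and x
  have gi: "g k integrable_on {0..}" for k
  proof -
    have "g k integrable_on {0..real k}"
      by (rule integrable_eq[OF decr_integrable[OF d, where a=0]]) (auto simp: g_def)
    then show ?thesis by (rule integrable_on_superset) (auto simp: g_def)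
  qed
  have gint: "integral {0..} (g k) = integral {0..real k} f" for k
    unfolding g_def integral_restrict_Int by (simp add: Int_absorb2 Int_commute)
  have mc: "f integrable_on {0..} \<and> (\<lambda>k. integral {0..} (g k)) \<longlonglongrightarrow> integral {0..} f"
  proof (rule monotone_convergence_increasing)
    show "g k integrable_on {0..}" for k by (rule gi)
    show "g k x \<le> g (Suc k) x" if "x \<in> {0..}" for k x using that nn by (auto simp: g_def)
    show "(\<lambda>k. g k x) \<longlonglongrightarrow> f x" if "x \<in> {0..}" for x
    proof (rule tendsto_eventually)
      obtain n :: nat where "x \<le> real n" using real_arch_simple by blast
      then show "eventually (\<lambda>k. g k x = f x) sequentially"
        using that by (auto simp: g_def eventually_sequentially intro!: exI[of _ n])
    qed
    have "\<bar>integral {0..} (g k)\<bar> \<le> \<bar>C\<bar>" for k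
    proof -
      have "integral {0..real k} f \<ge> 0"
        by (rule integral_nonneg[OF decr_integrable[OF d, where a=0]]) (auto intro: nn)
      then show ?thesis using C[of k] gint[of k] by simp
    qed
    then show "bounded (range (\<lambda>k. integral {0..} (g k)))"
      by (intro boundedI[of _ "\<bar>C\<bar>"]) auto
  qed
  then show fi: "f integrable_on {0..}" by blast
  show "integral {0..} f \<le> C"
    using mc C gint by (intro LIMSEQ_le_const2[of "\<lambda>k. integral {0..} (g k)"]) auto
  show "integral {0..b} f \<le> integral {0..} f" for b
  proof (cases "b \<ge> 0")
    case True
    show ?thesis
      by (rule integral_subset_le[OF _ decr_integrable[OF d, where a=0] fi]) (auto intro: nn)
  next
    case False
    then have "integral {0..b} f = 0" by simp
    moreover have "integral {0..} f \<ge> 0" by (rule integral_nonneg[OF fi]) (auto intro: nn)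
    ultimately show ?thesis by simp
  qed
qed

context chain begin

definition "Gf lam t = (\<Sum>x\<in>\<Omega>. lam x * sv x t)"

lemma sum_split_A: "(\<Sum>z\<in>\<Omega>. f z) = (\<Sum>z\<in>B. f z) + (\<Sum>z\<in>A. f z)"
  using sum.subset_diff[OF A_sub fin, of f] .

lemma sum_A_zero: "s \<ge> 0 \<Longrightarrow> (\<Sum>z\<in>A. g z * sv z s) = 0"
  using surv_A by (auto intro!: sum.neutral)

lemma per_y:
  assumes y: "y \<in> B" and tau: "\<tau> \<ge> 0" and s: "s \<ge> 0"
    and D: "\<And>y. y \<in> \<Omega> \<Longrightarrow> tv_dist \<Omega> (P \<tau> y) \<nu> \<le> D"
  shows "sv y (\<tau> + s) \<le> Gf \<nu> s + D" and "sv y (\<tau> + s) \<ge> Gf \<nu> s - D - (1 - sv y \<tau>)"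
proof -
  have yO: "y \<in> \<Omega>" using y by blast
  have sy: "sv y (\<tau> + s) = (\<Sum>z\<in>B. K \<tau> y z * sv z s)" by (rule surv_semi[OF y tau s])
  have PO: "(\<Sum>z\<in>\<Omega>. P \<tau> y z * sv z s) = (\<Sum>z\<in>B. P \<tau> y z * sv z s)"
    using sum_split_A[of "\<lambda>z. P \<tau> y z * sv z s"] sum_A_zero[OF s] by simp
  have tvb: "\<bar>\<Sum>z\<in>\<Omega>. (P \<tau> y z - \<nu> z) * sv z s\<bar> \<le> D"
  proof -
    have "\<bar>\<Sum>z\<in>\<Omega>. (P \<tau> y z - \<nu> z) * sv z s\<bar> \<le> tv_dist \<Omega> (P \<tau> y) \<nu>"
      by (rule tv_test[OF fin]) (use P_rowsum[OF yO] nu_prob surv_nonneg surv_le1 in \<open>auto simp: prob_on_def\<close>)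
    then show ?thesis using D[OF yO] by simp
  qed
  have diff: "(\<Sum>z\<in>\<Omega>. (P \<tau> y z - \<nu> z) * sv z s) = (\<Sum>z\<in>\<Omega>. P \<tau> y z * sv z s) - Gf \<nu> s"
    unfolding Gf_def by (simp add: left_diff_distrib sum_subtractf)
  have KP: "(\<Sum>z\<in>B. K \<tau> y z * sv z s) \<le> (\<Sum>z\<in>B. P \<tau> y z * sv z s)"
    using K_le_P[OF y _ tau] surv_nonneg by (intro sum_mono mult_right_mono) auto
  show "sv y (\<tau> + s) \<le> Gf \<nu> s + D"
    using sy KP PO tvb diff by (simp add: abs_le_iff)
  have "(\<Sum>z\<in>B. P \<tau> y z * sv z s) - (\<Sum>z\<in>B. K \<tau> y z * sv z s) = (\<Sum>z\<in>B. (P \<tau> y z - K \<tau> y z) * sv z s)"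
    by (simp add: left_diff_distrib sum_subtractf)
  also have "\<dots> \<le> (\<Sum>z\<in>B. (P \<tau> y z - K \<tau> y z) * 1)"
    using K_le_P[OF y _ tau] surv_le1 by (intro sum_mono mult_left_mono) auto
  also have "\<dots> = (\<Sum>z\<in>B. P \<tau> y z) - sv y \<tau>"
    using surv_B[OF y tau] by (simp add: sum_subtractf)
  also have "(\<Sum>z\<in>B. P \<tau> y z) \<le> 1"
  proof -
    have "(\<Sum>z\<in>A. P \<tau> y z) \<ge> 0" using P_nonneg[OF yO _ tau] A_sub by (auto intro!: sum_nonneg)
    then show ?thesis using P_rowsum[OF yO, of \<tau>] sum_split_A[of "P \<tau> y"] by simp
  qed
  finally have "(\<Sum>z\<in>B. P \<tau> y z * sv z s) - (\<Sum>z\<in>B. K \<tau> y z * sv z s) \<le> 1 - sv y \<tau>" by simp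
  then show "sv y (\<tau> + s) \<ge> Gf \<nu> s - D - (1 - sv y \<tau>)"
    using sy PO tvb diff by (simp add: abs_le_iff)
qed

lemma per_x:
  assumes x: "x \<in> \<Omega>" and t: "t \<ge> 0" and tau: "\<tau> \<ge> 0" and s: "s \<ge> 0"
    and D: "\<And>y. y \<in> \<Omega> \<Longrightarrow> tv_dist \<Omega> (P \<tau> y) \<nu> \<le> D"
  shows "sv x (t + \<tau> + s) \<le> sv x t * (Gf \<nu> s + D)"
    and "sv x (t + \<tau> + s) \<ge> sv x t * (Gf \<nu> s - D) - (sv x t - sv x (t + \<tau>))"
proof -
  have ts: "t + \<tau> + s \<ge> 0" "t + \<tau> \<ge> 0" using t tau s by auto
  have "(sv x (t + \<tau> + s) \<le> sv x t * (Gf \<nu> s + D)) \<and>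
        (sv x (t + \<tau> + s) \<ge> sv x t * (Gf \<nu> s - D) - (sv x t - sv x (t + \<tau>)))"
  proof (cases "x \<in> A")
    case True then show ?thesis using surv_A ts t by simp
  next
    case False
    then have xB: "x \<in> B" using x by blast
    have e: "sv x (t + \<tau> + s) = (\<Sum>y\<in>B. K t x y * sv y (\<tau> + s))"
      using surv_semi[OF xB t, of "\<tau> + s"] tau s by (simp add: add.assoc)
    have e2: "sv x (t + \<tau>) = (\<Sum>y\<in>B. K t x y * sv y \<tau>)" by (rule surv_semi[OF xB t tau])
    have st: "sv x t = (\<Sum>y\<in>B. K t x y)" by (rule surv_B[OF xB t])
    have K0: "\<And>y. y \<in> B \<Longrightarrow> K t x y \<ge> 0" using K_nonneg[OF xB _ t] by blast
    have "sv x (t + \<tau> + s) \<le> (\<Sum>y\<in>B. K t x y * (Gf \<nu> s + D))"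
      unfolding e using per_y(1)[OF _ tau s D] K0 by (intro sum_mono mult_left_mono) auto
    also have "\<dots> = sv x t * (Gf \<nu> s + D)" unfolding st by (simp add: sum_distrib_right)
    finally have u: "sv x (t + \<tau> + s) \<le> sv x t * (Gf \<nu> s + D)" .
    have "(\<Sum>y\<in>B. K t x y * (Gf \<nu> s - D - (1 - sv y \<tau>))) \<le> sv x (t + \<tau> + s)"
      unfolding e using per_y(2)[OF _ tau s D] K0 by (intro sum_mono mult_left_mono) auto
    moreover have "(\<Sum>y\<in>B. K t x y * (Gf \<nu> s - D - (1 - sv y \<tau>))) = sv x t * (Gf \<nu> s - D) - (sv x t - sv x (t + \<tau>))"
      unfolding st e2 by (simp add: algebra_simps sum.distrib sum_subtractf sum_distrib_left sum_distrib_right)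
    ultimately show ?thesis using u by simp
  qed
  then show "sv x (t + \<tau> + s) \<le> sv x t * (Gf \<nu> s + D)"
    and "sv x (t + \<tau> + s) \<ge> sv x t * (Gf \<nu> s - D) - (sv x t - sv x (t + \<tau>))" by auto
qed

lemma approx_mult:
  assumes lam: "\<And>x. x \<in> \<Omega> \<Longrightarrow> lam x \<ge> 0" and t: "t \<ge> 0" and tau: "\<tau> \<ge> 0" and s: "s \<ge> 0"
    and D: "\<And>y. y \<in> \<Omega> \<Longrightarrow> tv_dist \<Omega> (P \<tau> y) \<nu> \<le> D"
  shows "Gf lam (t + \<tau> + s) \<le> Gf lam t * (Gf \<nu> s + D)"
    and "Gf lam (t + \<tau> + s) \<ge> Gf lam t * (Gf \<nu> s - D) - (Gf lam t - Gf lam (t + \<tau>))"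
proof -
  have "Gf lam (t + \<tau> + s) \<le> (\<Sum>x\<in>\<Omega>. lam x * (sv x t * (Gf \<nu> s + D)))"
    unfolding Gf_def[of lam] using per_x(1)[OF _ t tau s D] lam by (intro sum_mono mult_left_mono) auto
  also have "\<dots> = Gf lam t * (Gf \<nu> s + D)" unfolding Gf_def[of lam] by (simp add: sum_distrib_right mult.assoc)
  finally show "Gf lam (t + \<tau> + s) \<le> Gf lam t * (Gf \<nu> s + D)" .
  have "(\<Sum>x\<in>\<Omega>. lam x * (sv x t * (Gf \<nu> s - D) - (sv x t - sv x (t + \<tau>)))) \<le> Gf lam (t + \<tau> + s)"
    unfolding Gf_def[of lam] using per_x(2)[OF _ t tau s D] lam by (intro sum_mono mult_left_mono) auto
  moreover have "(\<Sum>x\<in>\<Omega>. lam x * (sv x t * (Gf \<nu> s - D) - (sv x t - sv x (t + \<tau>))))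
      = Gf lam t * (Gf \<nu> s - D) - (Gf lam t - Gf lam (t + \<tau>))"
  proof -
    have "(\<Sum>x\<in>\<Omega>. lam x * (sv x t * (Gf \<nu> s - D) - (sv x t - sv x (t + \<tau>))))
        = (\<Sum>x\<in>\<Omega>. (lam x * sv x t) * (Gf \<nu> s - D) - (lam x * sv x t - lam x * sv x (t + \<tau>)))"
      by (intro sum.cong refl) (simp add: algebra_simps)
    also have "\<dots> = (\<Sum>x\<in>\<Omega>. lam x * sv x t) * (Gf \<nu> s - D) - ((\<Sum>x\<in>\<Omega>. lam x * sv x t) - (\<Sum>x\<in>\<Omega>. lam x * sv x (t + \<tau>)))"
      by (simp only: sum_subtractf sum_distrib_right)
    finally show ?thesis unfolding Gf_def[of lam] .
  qed
  ultimately show "Gf lam (t + \<tau> + s) \<ge> Gf lam t * (Gf \<nu> s - D) - (Gf lam t - Gf lam (t + \<tau>))" by simp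
qed

lemma nu_nonneg: "x \<in> \<Omega> \<Longrightarrow> \<nu> x \<ge> 0" using nu_prob by (simp add: prob_on_def)
lemma nu_sum: "(\<Sum>x\<in>\<Omega>. \<nu> x) = 1" using nu_prob by (simp add: prob_on_def)

lemma stat_err:
  assumes t: "t \<ge> 0" and tau: "\<tau> \<ge> 0"
  shows "Gf \<nu> t - Gf \<nu> (t + \<tau>) \<le> 1 - Gf \<nu> \<tau>"
proof -
  have px: "sv x t - sv x (t + \<tau>) \<le> (\<Sum>y\<in>B. P t x y * (1 - sv y \<tau>))" if x: "x \<in> \<Omega>" for x
  proof (cases "x \<in> A")
    case True
    have "(\<Sum>y\<in>B. P t x y * (1 - sv y \<tau>)) \<ge> 0"
      using P_nonneg[OF x _ t] surv_le1 by (auto intro!: sum_nonneg mult_nonneg_nonneg)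
    then show ?thesis using True surv_A t tau by simp
  next
    case False
    then have xB: "x \<in> B" using x by blast
    have "sv x t - sv x (t + \<tau>) = (\<Sum>y\<in>B. K t x y * (1 - sv y \<tau>))"
      using surv_B[OF xB t] surv_semi[OF xB t tau] by (simp add: right_diff_distrib sum_subtractf)
    also have "\<dots> \<le> (\<Sum>y\<in>B. P t x y * (1 - sv y \<tau>))"
      using K_le_P[OF xB _ t] surv_le1 by (intro sum_mono mult_right_mono) auto
    finally show ?thesis .
  qed
  have "Gf \<nu> t - Gf \<nu> (t + \<tau>) = (\<Sum>x\<in>\<Omega>. \<nu> x * (sv x t - sv x (t + \<tau>)))"
    unfolding Gf_def by (simp add: right_diff_distrib sum_subtractf)
  also have "\<dots> \<le> (\<Sum>x\<in>\<Omega>. \<nu> x * (\<Sum>y\<in>B. P t x y * (1 - sv y \<tau>)))"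
    using px nu_nonneg by (intro sum_mono mult_left_mono) auto
  also have "\<dots> = (\<Sum>y\<in>B. (\<Sum>x\<in>\<Omega>. \<nu> x * P t x y) * (1 - sv y \<tau>))"
    by (simp add: sum_distrib_left sum_distrib_right mult.assoc) (rule sum.swap)
  also have "\<dots> = (\<Sum>y\<in>B. \<nu> y * (1 - sv y \<tau>))"
    using P_stat by (intro sum.cong) auto
  also have "\<dots> \<le> (\<Sum>y\<in>\<Omega>. \<nu> y * (1 - sv y \<tau>))"
    using nu_nonneg surv_le1 fin by (intro sum_mono2) auto
  also have "\<dots> = 1 - Gf \<nu> \<tau>"
    unfolding Gf_def by (simp add: right_diff_distrib sum_subtractf nu_sum)
  finally show ?thesis .
qed


lemma Gf_nonneg: "(\<And>x. x \<in> \<Omega> \<Longrightarrow> lam x \<ge> 0) \<Longrightarrow> Gf lam t \<ge> 0"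
  unfolding Gf_def using surv_nonneg by (auto intro!: sum_nonneg)

lemma Gf_le1: assumes "prob_on \<Omega> lam" shows "Gf lam t \<le> 1"
proof -
  have "Gf lam t \<le> (\<Sum>x\<in>\<Omega>. lam x * 1)"
    unfolding Gf_def using assms surv_le1 by (intro sum_mono mult_left_mono) (auto simp: prob_on_def)
  then show ?thesis using assms by (simp add: prob_on_def)
qed

lemma Gf_decr: assumes "\<And>x. x \<in> \<Omega> \<Longrightarrow> lam x \<ge> 0" shows "decr (Gf lam)"
  unfolding decr_def Gf_def using assms surv_mono by (auto intro!: sum_mono mult_left_mono)

lemma Gf_zero: "Gf \<nu> 0 = (\<Sum>x\<in>B. \<nu> x)"
proof -
  have "Gf \<nu> 0 = (\<Sum>x\<in>B. \<nu> x * sv x 0) + (\<Sum>x\<in>A. \<nu> x * sv x 0)"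
    unfolding Gf_def by (rule sum_split_A)
  also have "(\<Sum>x\<in>A. \<nu> x * sv x 0) = 0" using sum_A_zero[of 0 \<nu>] by simp
  also have "(\<Sum>x\<in>B. \<nu> x * sv x 0) = (\<Sum>x\<in>B. \<nu> x)" using surv_zero by simp
  finally show ?thesis by simp
qed

lemma hit_cdf_eq: "prob_on \<Omega> lam \<Longrightarrow> hit_cdf \<Omega> R A lam t = 1 - Gf lam t"
  unfolding hit_cdf_def Gf_def prob_on_def by (simp add: right_diff_distrib sum_subtractf)

definition "flux = (\<Sum>y\<in>B. \<nu> y * \<rho> y)"

lemma flux_nonneg: "flux \<ge> 0"
  unfolding flux_def using nu_nonneg rho_nonneg by (auto intro!: sum_nonneg)

lemma flux_step: assumes t: "t \<ge> 0" and h: "h \<ge> 0"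
  shows "Gf \<nu> (t + h) \<ge> Gf \<nu> t - cc\<^sup>2 * h\<^sup>2 - h * flux"
proof -
  have px: "sv x (t + h) \<ge> sv x t * (1 - cc\<^sup>2 * h\<^sup>2) - h * (\<Sum>y\<in>B. P t x y * \<rho> y)" if x: "x \<in> \<Omega>" for x
  proof (cases "x \<in> A")
    case True
    have "(\<Sum>y\<in>B. P t x y * \<rho> y) \<ge> 0"
      using P_nonneg[OF x _ t] rho_nonneg by (auto intro!: sum_nonneg)
    then show ?thesis using True surv_A t h by (simp add: mult_nonneg_nonneg)
  next
    case False
    then have xB: "x \<in> B" using x by blast
    have K0: "\<And>y. y \<in> B \<Longrightarrow> K t x y \<ge> 0" using K_nonneg[OF xB _ t] by blast
    have "sv x (t + h) = (\<Sum>y\<in>B. K t x y * sv y h)" by (rule surv_semi[OF xB t h])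
    also have "\<dots> \<ge> (\<Sum>y\<in>B. K t x y * (1 - h * \<rho> y - cc\<^sup>2 * h\<^sup>2))"
      using surv_small[OF _ h] K0 by (intro sum_mono mult_left_mono) auto
    finally have a: "sv x (t + h) \<ge> (\<Sum>y\<in>B. K t x y * (1 - h * \<rho> y - cc\<^sup>2 * h\<^sup>2))" .
    have b: "(\<Sum>y\<in>B. K t x y * (1 - h * \<rho> y - cc\<^sup>2 * h\<^sup>2)) = sv x t * (1 - cc\<^sup>2 * h\<^sup>2) - h * (\<Sum>y\<in>B. K t x y * \<rho> y)"
      using surv_B[OF xB t] by (simp add: algebra_simps sum_subtractf sum_distrib_left sum_distrib_right sum.distrib)
    have c: "(\<Sum>y\<in>B. K t x y * \<rho> y) \<le> (\<Sum>y\<in>B. P t x y * \<rho> y)"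
      using K_le_P[OF xB _ t] rho_nonneg by (intro sum_mono mult_right_mono) auto
    show ?thesis using a b c h by (smt (verit, best) mult_left_mono)
  qed
  have "Gf \<nu> (t + h) \<ge> (\<Sum>x\<in>\<Omega>. \<nu> x * (sv x t * (1 - cc\<^sup>2 * h\<^sup>2) - h * (\<Sum>y\<in>B. P t x y * \<rho> y)))"
    unfolding Gf_def using px nu_nonneg by (intro sum_mono mult_left_mono) auto
  also have "(\<Sum>x\<in>\<Omega>. \<nu> x * (sv x t * (1 - cc\<^sup>2 * h\<^sup>2) - h * (\<Sum>y\<in>B. P t x y * \<rho> y)))
      = Gf \<nu> t * (1 - cc\<^sup>2 * h\<^sup>2) - h * (\<Sum>x\<in>\<Omega>. \<nu> x * (\<Sum>y\<in>B. P t x y * \<rho> y))"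
    unfolding Gf_def by (simp add: right_diff_distrib sum_subtractf sum_distrib_left sum_distrib_right mult_ac)
  also have "(\<Sum>x\<in>\<Omega>. \<nu> x * (\<Sum>y\<in>B. P t x y * \<rho> y)) = flux"
  proof -
    have "(\<Sum>x\<in>\<Omega>. \<nu> x * (\<Sum>y\<in>B. P t x y * \<rho> y)) = (\<Sum>x\<in>\<Omega>. \<Sum>y\<in>B. \<nu> x * P t x y * \<rho> y)"
      by (simp add: sum_distrib_left mult.assoc)
    also have "\<dots> = (\<Sum>y\<in>B. \<Sum>x\<in>\<Omega>. \<nu> x * P t x y * \<rho> y)" by (rule sum.swap)
    also have "\<dots> = (\<Sum>y\<in>B. (\<Sum>x\<in>\<Omega>. \<nu> x * P t x y) * \<rho> y)" by (simp add: sum_distrib_right)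
    also have "\<dots> = flux" unfolding flux_def using P_stat by (intro sum.cong) auto
    finally show ?thesis .
  qed
  finally have d: "Gf \<nu> (t + h) \<ge> Gf \<nu> t * (1 - cc\<^sup>2 * h\<^sup>2) - h * flux" .
  have "Gf \<nu> t * (cc\<^sup>2 * h\<^sup>2) \<le> 1 * (cc\<^sup>2 * h\<^sup>2)"
    using Gf_le1[OF nu_prob] by (intro mult_right_mono) auto
  then show ?thesis using d by (simp add: algebra_simps)
qed

lemma flux_iter: assumes h: "h \<ge> 0"
  shows "Gf \<nu> (real m * h) \<ge> Gf \<nu> 0 - real m * (cc\<^sup>2 * h\<^sup>2 + h * flux)"
proof (induction m)
  case 0 then show ?case by simp
next
  case (Suc m)
  have "Gf \<nu> (real m * h + h) \<ge> Gf \<nu> (real m * h) - cc\<^sup>2 * h\<^sup>2 - h * flux"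
    by (rule flux_step) (use h in auto)
  moreover have "real (Suc m) * h = real m * h + h" by (simp add: algebra_simps)
  ultimately show ?case using Suc.IH by (simp add: algebra_simps)
qed

lemma flux_bound: assumes tau: "\<tau> \<ge> 0" shows "Gf \<nu> \<tau> \<ge> Gf \<nu> 0 - \<tau> * flux"
proof (rule ccontr)
  assume "\<not> ?thesis"
  then have dpos: "Gf \<nu> 0 - \<tau> * flux - Gf \<nu> \<tau> > 0" by simp
  define d where "d = Gf \<nu> 0 - \<tau> * flux - Gf \<nu> \<tau>"
  obtain n :: nat where n: "real n > cc\<^sup>2 * \<tau>\<^sup>2 / d" using reals_Archimedean2 by blast
  have npos: "n > 0"
  proof -
    have "cc\<^sup>2 * \<tau>\<^sup>2 / d \<ge> 0" using dpos by (simp add: d_def)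
    then show ?thesis using n by (cases n) auto
  qed
  define h where "h = \<tau> / real n"
  have h0: "h \<ge> 0" using tau by (simp add: h_def)
  have "Gf \<nu> (real n * h) \<ge> Gf \<nu> 0 - real n * (cc\<^sup>2 * h\<^sup>2 + h * flux)" by (rule flux_iter[OF h0])
  moreover have "real n * h = \<tau>" using npos by (simp add: h_def)
  moreover have "real n * (cc\<^sup>2 * h\<^sup>2 + h * flux) = cc\<^sup>2 * \<tau>\<^sup>2 / real n + \<tau> * flux"
    using npos by (simp add: h_def power2_eq_square field_simps)
  ultimately have "Gf \<nu> \<tau> \<ge> Gf \<nu> 0 - cc\<^sup>2 * \<tau>\<^sup>2 / real n - \<tau> * flux" by simp
  then have "cc\<^sup>2 * \<tau>\<^sup>2 / real n \<ge> d" by (simp add: d_def)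
  then have "cc\<^sup>2 * \<tau>\<^sup>2 \<ge> d * real n" using npos by (simp add: field_simps)
  moreover have "d * real n > cc\<^sup>2 * \<tau>\<^sup>2" using n dpos by (simp add: d_def field_simps)
  ultimately show False by simp
qed

lemma flux_le_rate: "flux \<le> escape_rate \<Omega> R A \<nu>"
proof -
  have er: "escape_rate \<Omega> R A \<nu> = flux / (\<Sum>x\<in>B. \<nu> x)"
    unfolding escape_rate_def flux_def \<rho>_def by simp
  have nb: "(\<Sum>x\<in>B. \<nu> x) \<le> 1"
    using nu_sum sum_split_A[of \<nu>] nu_nonneg A_sub by (smt (verit, best) in_mono sum_nonneg)
  show ?thesis
  proof (cases "(\<Sum>x\<in>B. \<nu> x) = 0")
    case True
    moreover have "\<forall>x\<in>B. \<nu> x \<ge> 0" using nu_nonneg by blast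
    ultimately have "\<forall>x\<in>B. \<nu> x = 0" using finB sum_nonneg_eq_0_iff by blast
    then have "flux = 0" unfolding flux_def by simp
    then show ?thesis using er by simp
  next
    case False
    moreover have "(\<Sum>x\<in>B. \<nu> x) \<ge> 0" using nu_nonneg by (intro sum_nonneg) auto
    ultimately have pos: "(\<Sum>x\<in>B. \<nu> x) > 0" by simp
    have "flux \<le> flux / (\<Sum>x\<in>B. \<nu> x)"
      using pos nb flux_nonneg by (simp add: le_divide_eq mult_left_le)
    then show ?thesis using er by simp
  qed
qed

end

context chain begin

lemma decay: "\<exists>q. 0 \<le> q \<and> q < 1 \<and> (\<forall>n::nat. \<forall>x\<in>\<Omega>. sv x (real n) \<le> q ^ n)"
proof -
  obtain \<beta> where bpos: "\<beta> > 0" and b: "\<forall>x\<in>\<Omega>. \<forall>y\<in>\<Omega>. P 1 x y \<ge> \<beta>" using P_pos by blast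
  define q where "q = max (1 - \<beta>) 0"
  have q0: "q \<ge> 0" and q1: "q < 1" using bpos by (auto simp: q_def)
  obtain a0 where a0: "a0 \<in> A" using A_ne by blast
  have s1: "sv x 1 \<le> q" if xB: "x \<in> B" for x
  proof -
    have xO: "x \<in> \<Omega>" using xB by blast
    have "P 1 x a0 \<le> (\<Sum>a\<in>A. P 1 x a)"
      using a0 A_sub P_nonneg[OF xO] finite_subset[OF A_sub fin]
      by (intro member_le_sum) auto
    moreover have "P 1 x a0 \<ge> \<beta>" using b xO a0 A_sub by blast
    ultimately have "(\<Sum>a\<in>A. P 1 x a) \<ge> \<beta>" by simp
    then show ?thesis using Krow_le[OF xB, of 1] surv_B[OF xB, of 1] by (simp add: q_def)
  qed
  have "\<forall>x\<in>\<Omega>. sv x (real n) \<le> q ^ n" for n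
  proof (induction n)
    case 0 then show ?case using surv_le1 by simp
  next
    case (Suc n)
    show ?case
    proof
      fix x assume x: "x \<in> \<Omega>"
      show "sv x (real (Suc n)) \<le> q ^ Suc n"
      proof (cases "x \<in> A")
        case True then show ?thesis using surv_A q0 by simp
      next
        case False
        then have xB: "x \<in> B" using x by blast
        have "sv x (1 + real n) = (\<Sum>y\<in>B. K 1 x y * sv y (real n))" by (rule surv_semi[OF xB]) auto
        also have "\<dots> \<le> (\<Sum>y\<in>B. K 1 x y * q ^ n)"
          using Suc.IH K_nonneg[OF xB] by (intro sum_mono mult_left_mono) auto
        also have "\<dots> = sv x 1 * q ^ n" using surv_B[OF xB, of 1] by (simp add: sum_distrib_right)
        also have "\<dots> \<le> q * q ^ n" using s1[OF xB] q0 by (intro mult_right_mono) auto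
        finally show ?thesis by (simp add: add.commute)
      qed
    qed
  qed
  then show ?thesis using q0 q1 by blast
qed

lemma surv_decr: "x \<in> \<Omega> \<Longrightarrow> decr (\<lambda>t. sv x t)"
  unfolding decr_def using surv_mono by blast

lemma surv_integrable: assumes x: "x \<in> \<Omega>" shows "(\<lambda>t. sv x t) integrable_on {0..}"
proof -
  obtain q where q0: "0 \<le> q" and q1: "q < 1" and qd: "\<forall>n::nat. \<forall>x\<in>\<Omega>. sv x (real n) \<le> q ^ n"
    using decay by blast
  have C: "integral {0..real k} (\<lambda>t. sv x t) \<le> 1 / (1 - q)" for k :: nat
  proof -
    have "integral {0..real k * 1} (\<lambda>t. sv x t) \<le> 1 * (\<Sum>n<k. sv x (real n * 1))"
      by (rule int_steps(1)[OF surv_decr[OF x]]) simp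
    also have "\<dots> = (\<Sum>n<k. sv x (real n))" by simp
    also have "\<dots> \<le> (\<Sum>n<k. q ^ n)" using qd x by (intro sum_mono) auto
    also have "\<dots> = (1 - q ^ k) / (1 - q)" using q1 sum_gp_strict[of q k] by simp
    also have "\<dots> \<le> 1 / (1 - q)" using q0 q1 by (intro divide_right_mono) auto
    finally show ?thesis by simp
  qed
  show ?thesis by (rule decr_integral(1)[OF surv_decr[OF x] _ C]) (use surv_nonneg x in auto)
qed

lemma surv_cmul_integrable: "x \<in> \<Omega> \<Longrightarrow> (\<lambda>t. c * sv x t) integrable_on {0..}"
  using integrable_on_cmult_left[OF surv_integrable, of x c] by simp

lemma Gf_integrable: "(\<lambda>t. Gf lam t) integrable_on {0..}"
  unfolding Gf_def
  by (intro integrable_sum fin surv_cmul_integrable)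

lemma mean_eq: "mean_hit \<Omega> R A \<nu> = integral {0..} (Gf \<nu>)"
proof -
  have "integral {0..} (Gf \<nu>) = (\<Sum>x\<in>\<Omega>. integral {0..} (\<lambda>t. \<nu> x * sv x t))"
    unfolding Gf_def
    by (rule integral_sum[OF fin]) (rule surv_cmul_integrable)
  also have "\<dots> = (\<Sum>x\<in>\<Omega>. \<nu> x * integral {0..} (\<lambda>t. sv x t))"
    using integral_cmul[of "{0::real..}" "\<nu> _" "\<lambda>t. sv _ t"] by simp
  finally show ?thesis unfolding mean_hit_def by simp
qed

end

locale blk =
  fixes F :: "real \<Rightarrow> real" and \<tau> \<epsilon> T \<delta> :: real
  assumes dec: "decr F" and nn: "\<And>t. t \<ge> 0 \<Longrightarrow> F t \<ge> 0" and le1: "\<And>t. t \<ge> 0 \<Longrightarrow> F t \<le> 1"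
    and up: "\<And>t s. t \<ge> 0 \<Longrightarrow> s \<ge> 0 \<Longrightarrow> F (t + \<tau> + s) \<le> F t * (F s + \<epsilon>)"
    and low: "\<And>t s. t \<ge> 0 \<Longrightarrow> s \<ge> 0 \<Longrightarrow> F (t + \<tau> + s) \<ge> F t * (F s - \<epsilon>) - \<epsilon>"
    and eps: "\<epsilon> \<ge> 0" and tau: "\<tau> \<ge> 0" and Tpos: "T > 0" and dpos: "\<delta> > 0" and taud: "\<tau> \<le> \<delta> * T"
    and Fint: "F integrable_on {0..}" and Tint: "T = integral {0..} F"
begin

definition "h = \<delta> * T"
definition "p = F (h - \<tau>)"

lemma hpos: "h > 0" unfolding h_def using dpos Tpos by simp
lemma s0: "h - \<tau> \<ge> 0" unfolding h_def using taud by simp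
lemma p0: "p \<ge> 0" unfolding p_def using nn s0 by simp
lemma p1: "p \<le> 1" unfolding p_def using le1 s0 by simp

lemma step_eq: "F (t + h) = F (t + \<tau> + (h - \<tau>))" by simp

lemma B1: "F (real m * h) \<le> (p + \<epsilon>) ^ m"
proof (induction m)
  case 0 then show ?case using le1[of 0] by simp
next
  case (Suc m)
  have t0: "real m * h \<ge> 0" using hpos by simp
  have "F (real (Suc m) * h) = F (real m * h + \<tau> + (h - \<tau>))" by (simp add: algebra_simps)
  also have "\<dots> \<le> F (real m * h) * (p + \<epsilon>)" unfolding p_def by (rule up[OF t0 s0])
  also have "\<dots> \<le> (p + \<epsilon>) ^ m * (p + \<epsilon>)"
    using Suc.IH p0 eps by (intro mult_right_mono) auto
  finally show ?case by (simp add: mult.commute)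
qed

definition "q = max (p - \<epsilon>) 0"

lemma q0: "q \<ge> 0" and q1: "q \<le> 1" unfolding q_def using p1 eps by auto

lemma B2: "F (real m * h) \<ge> F 0 * q ^ m - real m * \<epsilon>"
proof (induction m)
  case 0 then show ?case by simp
next
  case (Suc m)
  have t0: "real m * h \<ge> 0" using hpos by simp
  have e: "F (real (Suc m) * h) = F (real m * h + \<tau> + (h - \<tau>))" by (simp add: algebra_simps)
  show ?case
  proof (cases "p - \<epsilon> \<ge> 0")
    case True
    then have qq: "q = p - \<epsilon>" unfolding q_def by simp
    have "F (real (Suc m) * h) \<ge> F (real m * h) * q - \<epsilon>"
      unfolding e qq p_def by (rule low[OF t0 s0])
    moreover have "F (real m * h) * q \<ge> (F 0 * q ^ m - real m * \<epsilon>) * q"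
      using Suc.IH q0 by (rule mult_right_mono)
    moreover have "(F 0 * q ^ m - real m * \<epsilon>) * q \<ge> F 0 * q ^ Suc m - real m * \<epsilon>"
    proof -
      have "real m * \<epsilon> * q \<le> real m * \<epsilon>" using q0 q1 eps by (simp add: mult_left_le)
      then show ?thesis by (simp add: algebra_simps)
    qed
    ultimately show ?thesis by (simp add: algebra_simps)
  next
    case False
    then have "q = 0" unfolding q_def by simp
    moreover have "real (Suc m) * \<epsilon> \<ge> 0" using eps by simp
    moreover have "F (real (Suc m) * h) \<ge> 0" using nn hpos by simp
    ultimately show ?thesis by simp
  qed
qed

lemma geo_bound: fixes r :: real assumes "0 \<le> r" "r < 1" shows "(\<Sum>m<M. r ^ m) \<le> 1 / (1 - r)"
proof -
  have "(\<Sum>m<M. r ^ m) = (1 - r ^ M) / (1 - r)" using assms sum_gp_strict[of r M] by simp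
  also have "\<dots> \<le> 1 / (1 - r)" using assms by (intro divide_right_mono) auto
  finally show ?thesis .
qed

lemma B3: "p \<ge> 1 - \<delta> - \<epsilon>"
proof (cases "p + \<epsilon> \<ge> 1")
  case True then show ?thesis using dpos by simp
next
  case False
  define r where "r = p + \<epsilon>"
  have r0: "r \<ge> 0" and r1: "r < 1" using p0 eps False by (auto simp: r_def)
  have bound: "integral {0..real k} F \<le> h / (1 - r)" for k :: nat
  proof -
    obtain M :: nat where M: "real k / h \<le> real M" using real_arch_simple by blast
    have kM: "real k \<le> real M * h" using M hpos by (simp add: field_simps)
    have "integral {0..real k} F \<le> integral {0..real M * h} F"
      by (rule integral_subset_le) (use kM decr_integrable[OF dec, where a=0] nn in auto)
    also have "\<dots> \<le> h * (\<Sum>n<M. F (real n * h))" by (rule int_steps(1)[OF dec]) (use hpos in simp)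
    also have "\<dots> \<le> h * (\<Sum>n<M. r ^ n)"
      using B1 hpos by (intro mult_left_mono sum_mono) (auto simp: r_def)
    also have "\<dots> \<le> h * (1 / (1 - r))" using geo_bound[OF r0 r1] hpos by (intro mult_left_mono) auto
    finally show ?thesis by simp
  qed
  have "integral {0..} F \<le> h / (1 - r)" by (rule decr_integral(2)[OF dec nn bound]) auto
  then have "T \<le> h / (1 - r)" using Tint by simp
  then have "T * (1 - r) \<le> h" using r1 by (simp add: field_simps)
  then have "T * (1 - r) \<le> T * \<delta>" by (simp add: h_def mult.commute)
  then have "1 - r \<le> \<delta>" using Tpos by simp
  then show ?thesis by (simp add: r_def)
qed

lemma B4: assumes r0: "0 \<le> r" and pr: "p - \<epsilon> \<ge> r"
  shows "F 0 * (\<Sum>m<M. r ^ Suc m) - (\<Sum>m<M. real (Suc m) * \<epsilon>) \<le> 1 / \<delta>"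
proof -
  have qr: "q \<ge> r" using pr unfolding q_def by simp
  have F0: "F 0 \<ge> 0" using nn by simp
  have "h * (F 0 * (\<Sum>m<M. r ^ Suc m) - (\<Sum>m<M. real (Suc m) * \<epsilon>))
      = h * (\<Sum>m<M. F 0 * r ^ Suc m - real (Suc m) * \<epsilon>)"
    by (simp add: sum_subtractf sum_distrib_left)
  also have "\<dots> \<le> h * (\<Sum>m<M. F (real (Suc m) * h))"
  proof (intro mult_left_mono sum_mono)
    fix m
    have "F 0 * r ^ Suc m \<le> F 0 * q ^ Suc m"
      using r0 qr F0 by (intro mult_left_mono power_mono) auto
    then show "F 0 * r ^ Suc m - real (Suc m) * \<epsilon> \<le> F (real (Suc m) * h)"
      using B2[of "Suc m"] by simp
  qed (use hpos in simp)
  also have "\<dots> \<le> integral {0..real M * h} F" by (rule int_steps(2)[OF dec]) (use hpos in simp)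
  also have "\<dots> \<le> integral {0..} F" by (rule integral_subset_le) (use Fint decr_integrable[OF dec, where a=0] nn in auto)
  also have "\<dots> = T" using Tint by simp
  also have "T = h * (1 / \<delta>)" using dpos by (simp add: h_def)
  finally show ?thesis using hpos by (rule mult_left_le_imp_le)
qed

end


lemma expo_core:
  fixes F :: "nat \<Rightarrow> real \<Rightarrow> real" and \<tau> \<epsilon> T :: "nat \<Rightarrow> real"
  assumes dec: "\<And>N. decr (F N)" and nn: "\<And>N t. t \<ge> 0 \<Longrightarrow> F N t \<ge> 0" and le1: "\<And>N t. t \<ge> 0 \<Longrightarrow> F N t \<le> 1"
    and up: "\<And>N t s. t \<ge> 0 \<Longrightarrow> s \<ge> 0 \<Longrightarrow> F N (t + \<tau> N + s) \<le> F N t * (F N s + \<epsilon> N)"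
    and low: "\<And>N t s. t \<ge> 0 \<Longrightarrow> s \<ge> 0 \<Longrightarrow> F N (t + \<tau> N + s) \<ge> F N t * (F N s - \<epsilon> N) - \<epsilon> N"
    and eps0: "\<And>N. \<epsilon> N \<ge> 0" and tau0: "\<And>N. \<tau> N \<ge> 0"
    and Fint: "\<And>N. F N integrable_on {0..}" and Tint: "\<And>N. T N = integral {0..} (F N)"
    and F0: "(\<lambda>N. F N 0) \<longlonglongrightarrow> 1" and epsl: "\<epsilon> \<longlonglongrightarrow> 0" and tauT: "(\<lambda>N. \<tau> N / T N) \<longlonglongrightarrow> 0"
    and Tpos: "eventually (\<lambda>N. T N > 0) sequentially"
    and y: "y > 0"
  shows "(\<lambda>N. F N (y * T N)) \<longlonglongrightarrow> exp (- y)"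
proof (rule tendstoI)
  fix \<gamma> :: real assume g: "\<gamma> > 0"
  have l1: "(\<lambda>n. inverse ((1 + y / real n) ^ n)) \<longlonglongrightarrow> exp (- y)"
    using tendsto_inverse[OF tendsto_exp_limit_sequentially[of y]] by (simp add: exp_minus)
  have l2: "(\<lambda>n. (1 + (- y) / real n) ^ n) \<longlonglongrightarrow> exp (- y)"
    by (rule tendsto_exp_limit_sequentially)
  have l3: "(\<lambda>n. y / real n) \<longlonglongrightarrow> 0"
    by (intro tendsto_divide_0[OF tendsto_const] filterlim_at_top_imp_at_infinity[OF filterlim_real_sequentially])
  have ev1: "eventually (\<lambda>n. inverse ((1 + y / real n) ^ n) < exp (- y) + \<gamma>/2) sequentially"
    using l1 g by (intro order_tendstoD) auto
  have ev2: "eventually (\<lambda>n. (1 + (- y) / real n) ^ n > exp (- y) - \<gamma>/2) sequentially"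
    using l2 g by (intro order_tendstoD) auto
  have ev3: "eventually (\<lambda>n. y / real n < 1/2) sequentially"
    using l3 by (intro order_tendstoD) auto
  have ev4: "eventually (\<lambda>n::nat. n \<ge> 1) sequentially" by (rule eventually_ge_at_top)
  obtain n :: nat where n1: "inverse ((1 + y / real n) ^ n) < exp (- y) + \<gamma>/2"
    and n2: "(1 + (- y) / real n) ^ n > exp (- y) - \<gamma>/2" and n3: "y / real n < 1/2" and n4: "n \<ge> 1"
    using eventually_happens'[OF sequentially_bot, OF eventually_conj[OF ev1 eventually_conj[OF ev2 eventually_conj[OF ev3 ev4]]]]
    by blast
  define \<delta> where "\<delta> = y / real n"
  have dpos: "\<delta> > 0" using y n4 by (simp add: \<delta>_def)
  have dhalf: "\<delta> < 1/2" using n3 by (simp add: \<delta>_def)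
  define u where "u = 1 / (1 + \<delta>)"
  define w where "w = 1 - \<delta>"
  have u0: "u > 0" and u1: "u < 1" using dpos by (auto simp: u_def)
  have w0: "w > 1/2" using dhalf by (simp add: w_def)
  have un: "u ^ n < exp (- y) + \<gamma>/2" using n1 by (simp add: u_def \<delta>_def power_one_over inverse_eq_divide)
  have wn: "w ^ n > exp (- y) - \<gamma>/2" using n2 by (simp add: w_def \<delta>_def)
  define kj where "kj j = inverse (real (Suc j))" for j :: nat
  have kjl: "kj \<longlonglongrightarrow> 0" unfolding kj_def by (rule LIMSEQ_inverse_real_of_nat)
  have m1: "(\<lambda>j. (u + 2 * kj j) ^ n) \<longlonglongrightarrow> u ^ n"
    using kjl by (auto intro!: tendsto_eq_intros)
  have m2: "(\<lambda>j. (w - 2 * kj j) ^ n) \<longlonglongrightarrow> w ^ n"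
    using kjl by (auto intro!: tendsto_eq_intros)
  have m3: "(\<lambda>j. u + 2 * kj j) \<longlonglongrightarrow> u" using kjl by (auto intro!: tendsto_eq_intros)
  have m4: "(\<lambda>j. w - 2 * kj j) \<longlonglongrightarrow> w" using kjl by (auto intro!: tendsto_eq_intros)
  have evk: "eventually (\<lambda>j. (u + 2 * kj j) ^ n < exp (- y) + \<gamma>/2 \<and> (w - 2 * kj j) ^ n > exp (- y) - \<gamma>/2
      \<and> u + 2 * kj j < 1 \<and> w - 2 * kj j > 0) sequentially"
  proof -
    have w00: "0 < w" using w0 by simp
    show ?thesis
      using order_tendstoD(2)[OF m1 un] order_tendstoD(1)[OF m2 wn] order_tendstoD(2)[OF m3 u1]
        order_tendstoD(1)[OF m4 w00]
      by eventually_elim auto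
  qed
  obtain j where k1: "(u + 2 * kj j) ^ n < exp (- y) + \<gamma>/2" and k2: "(w - 2 * kj j) ^ n > exp (- y) - \<gamma>/2"
    and k3: "u + 2 * kj j < 1" and k4: "w - 2 * kj j > 0"
    using eventually_happens'[OF sequentially_bot evk] by blast
  define \<kappa> where "\<kappa> = kj j"
  have kpos: "\<kappa> > 0" by (simp add: \<kappa>_def kj_def)
  define r where "r = u + \<kappa> / 2"
  have r0: "r \<ge> 0" and r1: "r < 1" using u0 kpos k3 by (auto simp: r_def \<kappa>_def)
  have ru: "r > u" using kpos by (simp add: r_def)
  have rlim: "r / (1 - r) > 1 / \<delta>"
  proof -
    have "r * (1 + \<delta>) > 1" using ru dpos by (simp add: u_def field_simps)
    then have "r * \<delta> > 1 - r" by (simp add: algebra_simps)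
    then show ?thesis using r1 dpos by (simp add: field_simps)
  qed
  have psum: "(\<lambda>M. \<Sum>m<M. r ^ Suc m) \<longlonglongrightarrow> r / (1 - r)"
  proof -
    have e: "(\<Sum>m<M. r ^ Suc m) = r * (1 - r ^ M) / (1 - r)" for M
      using sum_gp_strict[of r M] r1 by (simp add: sum_distrib_left[symmetric])
    have "(\<lambda>M. r * (1 - r ^ M) / (1 - r)) \<longlonglongrightarrow> r * (1 - 0) / (1 - r)"
    proof -
      have pw: "(\<lambda>M. r ^ M) \<longlonglongrightarrow> 0" using r0 r1 by (intro LIMSEQ_power_zero) auto
      show ?thesis by (intro tendsto_divide tendsto_mult tendsto_diff tendsto_const pw) (use r1 in simp)
    qed
    then show ?thesis unfolding e by simp
  qed
  obtain M where M: "(\<Sum>m<M. r ^ Suc m) > 1 / \<delta>"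
    using eventually_happens'[OF sequentially_bot order_tendstoD(1)[OF psum rlim]] by blast
  have c1: "eventually (\<lambda>N. F N 0 * (\<Sum>m<M. r ^ Suc m) - (\<Sum>m<M. real (Suc m) * \<epsilon> N) > 1 / \<delta>) sequentially"
  proof -
    have "(\<lambda>N. F N 0 * (\<Sum>m<M. r ^ Suc m) - (\<Sum>m<M. real (Suc m) * \<epsilon> N)) \<longlonglongrightarrow> 1 * (\<Sum>m<M. r ^ Suc m) - (\<Sum>m<M. real (Suc m) * 0)"
      using F0 epsl by (intro tendsto_intros)
    then show ?thesis using M by (intro order_tendstoD(1)) auto
  qed
  have c2: "eventually (\<lambda>N. F N 0 * (w - 2 * \<kappa>) ^ n - real n * \<epsilon> N > exp (- y) - \<gamma>) sequentially"
  proof -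
    have "(\<lambda>N. F N 0 * (w - 2 * \<kappa>) ^ n - real n * \<epsilon> N) \<longlonglongrightarrow> 1 * (w - 2 * \<kappa>) ^ n - real n * 0"
      using F0 epsl by (intro tendsto_intros)
    then show ?thesis using k2 g unfolding \<kappa>_def by (intro order_tendstoD(1)) auto
  qed
  have c3: "eventually (\<lambda>N. \<epsilon> N < \<kappa> / 2) sequentially"
    using epsl kpos by (intro order_tendstoD) auto
  have c4: "eventually (\<lambda>N. \<tau> N / T N < \<delta>) sequentially"
    using tauT dpos by (intro order_tendstoD) auto
  show "eventually (\<lambda>N. dist (F N (y * T N)) (exp (- y)) < \<gamma>) sequentially"
    using c1 c2 c3 c4 Tpos
  proof eventually_elim
    case (elim N)
    have Tp: "T N > 0" using elim by simp
    have taud: "\<tau> N \<le> \<delta> * T N" using elim(4) Tp by (simp add: field_simps)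
    interpret b: blk "F N" "\<tau> N" "\<epsilon> N" "T N" \<delta>
      by unfold_locales (use dec nn le1 up low eps0 tau0 Tp dpos taud Fint Tint in auto)
    have pu: "b.p \<le> u + \<kappa>"
    proof (rule ccontr)
      assume "\<not> b.p \<le> u + \<kappa>"
      then have "b.p - \<epsilon> N \<ge> r" using elim(3) by (simp add: r_def)
      from b.B4[OF r0 this, of M] elim(1) show False by simp
    qed
    have pl: "b.p \<ge> 1 - \<delta> - \<epsilon> N" by (rule b.B3)
    have hh: "b.h = \<delta> * T N" by (rule b.h_def)
    have yT: "y * T N = real n * b.h" unfolding hh using n4 by (simp add: \<delta>_def)
    have upper: "F N (y * T N) < exp (- y) + \<gamma>"
    proof -
      have "F N (y * T N) \<le> (b.p + \<epsilon> N) ^ n" unfolding yT by (rule b.B1)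
      also have "\<dots> \<le> (u + 2 * \<kappa>) ^ n"
        using pu elim(3) b.p0 eps0[of N] by (intro power_mono) auto
      also have "\<dots> < exp (- y) + \<gamma>" using k1 g by (simp add: \<kappa>_def)
      finally show ?thesis .
    qed
    have lower: "F N (y * T N) > exp (- y) - \<gamma>"
    proof -
      have qw: "b.q \<ge> w - 2 * \<kappa>" using pl elim(3) eps0[of N] by (simp add: b.q_def w_def le_max_iff_disj)
      have F00: "F N 0 \<ge> 0" using nn by simp
      have "exp (- y) - \<gamma> < F N 0 * (w - 2 * \<kappa>) ^ n - real n * \<epsilon> N" using elim(2) .
      also have "\<dots> \<le> F N 0 * b.q ^ n - real n * \<epsilon> N"
        using qw k4 F00 by (simp add: \<kappa>_def mult_left_mono power_mono)
      also have "\<dots> \<le> F N (y * T N)" unfolding yT by (rule b.B2)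
      finally show ?thesis .
    qed
    show ?case using upper lower by (simp add: dist_real_def abs_less_iff)
  qed
qed

lemma cdf_exp1: "cdf (density lborel (exponential_density 1)) x = (if 0 \<le> x then 1 - exp (- x) else 0)"
proof -
  have "emeasure (density lborel (exponential_density 1)) {..x} = ennreal (erlang_CDF 0 1 x)"
    by (rule emeasure_erlang_density) simp
  moreover have "erlang_CDF 0 1 x \<ge> 0" by (simp add: erlang_CDF_0)
  ultimately show ?thesis
    unfolding cdf_def2 measure_def by (simp add: erlang_CDF_0)
qed

lemma sqrt_choice:
  fixes a :: real assumes a: "a > 0"
  shows "(real (nat \<lfloor>1 / sqrt a\<rfloor>) + 1) * a \<le> sqrt a + a"
    and "1 / (real (nat \<lfloor>1 / sqrt a\<rfloor>) + 1) \<le> sqrt a"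
proof -
  define z where "z = 1 / sqrt a"
  have z0: "z > 0" using a by (simp add: z_def)
  have k1: "real (nat \<lfloor>z\<rfloor>) \<le> z" using z0 by linarith
  have k2: "real (nat \<lfloor>z\<rfloor>) > z - 1" using z0 by linarith
  have sa: "sqrt a > 0" using a by simp
  have "(real (nat \<lfloor>z\<rfloor>) + 1) * a \<le> (z + 1) * a" using k1 a by (intro mult_right_mono) auto
  also have "\<dots> = sqrt a + a" using sa a by (simp add: z_def field_simps)
  finally show "(real (nat \<lfloor>1 / sqrt a\<rfloor>) + 1) * a \<le> sqrt a + a" by (simp add: z_def)
  have p1: "0 < real (nat \<lfloor>z\<rfloor>) + 1" by (rule add_nonneg_pos) auto
  have pz: "0 < (real (nat \<lfloor>z\<rfloor>) + 1) * z" using z0 p1 by (rule mult_pos_pos[rotated])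
  have "1 / (real (nat \<lfloor>z\<rfloor>) + 1) \<le> 1 / z" using k2 z0 pz by (intro divide_left_mono) auto
  then show "1 / (real (nat \<lfloor>1 / sqrt a\<rfloor>) + 1) \<le> sqrt a" by (simp add: z_def)
qed

lemma half_pow: "(1/2::real) ^ (k + 2) \<le> 1 / (real k + 1)"
proof -
  have "real k + 1 \<le> 2 ^ k"
  proof -
    have "k < 2 ^ k" by (rule less_exp)
    then have "Suc k \<le> 2 ^ k" by (rule Suc_leI)
    then have "real (Suc k) \<le> real (2 ^ k)" by (rule of_nat_mono)
    then show ?thesis by simp
  qed
  also have "(2::real) ^ k \<le> 2 ^ (k + 2)" by (rule power_increasing) auto
  finally have "real k + 1 \<le> 2 ^ (k + 2)" .
  then show ?thesis by (simp add: power_one_over field_simps)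
qed

lemma sandwich0:
  fixes f g :: "nat \<Rightarrow> real"
  assumes "eventually (\<lambda>N. 0 \<le> f N \<and> f N \<le> g N) sequentially" and "g \<longlonglongrightarrow> 0"
  shows "f \<longlonglongrightarrow> 0"
proof (rule tendsto_sandwich[where f="\<lambda>_. 0" and g=f and h=g])
  show "eventually (\<lambda>N. 0 \<le> f N) sequentially" using assms(1) by (rule eventually_mono) auto
  show "eventually (\<lambda>N. f N \<le> g N) sequentially" using assms(1) by (rule eventually_mono) auto
qed (use assms in auto)


context chain begin

lemma rate_nonneg: "escape_rate \<Omega> R A \<nu> \<ge> 0"
  using flux_nonneg flux_le_rate by simp

lemma Gf0_eq: "Gf \<nu> 0 = 1 - (\<Sum>x\<in>A. \<nu> x)"
  using Gf_zero sum_split_A[of \<nu>] nu_sum by simp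

lemma package:
  fixes k :: nat and t0 :: real and lam :: "'a \<Rightarrow> real"
  assumes t0: "t0 \<in> mixset" and lam: "prob_on \<Omega> lam"
  defines "\<tau> \<equiv> real (Suc k) * t0" and "D \<equiv> (1/2::real) ^ (k + 2)" and "\<epsilon> \<equiv> (1/2::real) ^ (k + 2) + (1 - Gf \<nu> (real (Suc k) * t0))"
  shows "\<tau> > 0" and "0 \<le> D" and "D \<le> \<epsilon>"
    and "\<epsilon> \<le> D + (\<Sum>x\<in>A. \<nu> x) + \<tau> * escape_rate \<Omega> R A \<nu>"
    and "\<And>t s. t \<ge> 0 \<Longrightarrow> s \<ge> 0 \<Longrightarrow> Gf \<nu> (t + \<tau> + s) \<le> Gf \<nu> t * (Gf \<nu> s + \<epsilon>)"
    and "\<And>t s. t \<ge> 0 \<Longrightarrow> s \<ge> 0 \<Longrightarrow> Gf \<nu> (t + \<tau> + s) \<ge> Gf \<nu> t * (Gf \<nu> s - \<epsilon>) - \<epsilon>"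
    and "\<And>t s. t \<ge> 0 \<Longrightarrow> s \<ge> 0 \<Longrightarrow> Gf lam (t + \<tau> + s) \<le> Gf \<nu> s + \<epsilon>"
    and "\<And>t s. t \<ge> 0 \<Longrightarrow> s \<ge> 0 \<Longrightarrow> Gf lam (t + \<tau> + s) \<ge> Gf \<nu> s - \<epsilon> - 2 * (1 - Gf lam (t + \<tau>))"
proof -
  have eps_eq: "\<epsilon> = D + (1 - Gf \<nu> \<tau>)" unfolding \<epsilon>_def D_def \<tau>_def ..
  have tpos: "t0 > 0" using t0 by (simp add: mixset_def)
  show tau: "\<tau> > 0" using tpos by (simp add: \<tau>_def)
  show D0: "0 \<le> D" by (simp add: D_def)
  have D14: "D \<le> 1/4" unfolding D_def
  proof -
    have "(1/2::real) ^ (k + 2) \<le> (1/2) ^ 2" by (rule power_decreasing) auto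
    then show "(1/2::real) ^ (k + 2) \<le> 1/4" by (simp add: power2_eq_square)
  qed
  have tvD: "\<And>y. y \<in> \<Omega> \<Longrightarrow> tv_dist \<Omega> (P \<tau> y) \<nu> \<le> D"
    using mix_power[OF t0, of k] by (simp add: \<tau>_def D_def)
  have nuP: "\<And>x. x \<in> \<Omega> \<Longrightarrow> \<nu> x \<ge> 0" by (rule nu_nonneg)
  have lamP: "\<And>x. x \<in> \<Omega> \<Longrightarrow> lam x \<ge> 0" using lam by (simp add: prob_on_def)
  have F1: "\<And>t. Gf \<nu> t \<le> 1" by (rule Gf_le1[OF nu_prob])
  have F0: "\<And>t. Gf \<nu> t \<ge> 0" by (rule Gf_nonneg[OF nuP])
  have L1: "\<And>t. Gf lam t \<le> 1" by (rule Gf_le1[OF lam])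
  have L0: "\<And>t. Gf lam t \<ge> 0" by (rule Gf_nonneg[OF lamP])
  show De: "D \<le> \<epsilon>" using F1[of \<tau>] by (simp add: eps_eq)
  have fb: "Gf \<nu> \<tau> \<ge> Gf \<nu> 0 - \<tau> * flux" using flux_bound tau by simp
  have "\<tau> * flux \<le> \<tau> * escape_rate \<Omega> R A \<nu>" using flux_le_rate tau by (intro mult_left_mono) auto
  then show "\<epsilon> \<le> D + (\<Sum>x\<in>A. \<nu> x) + \<tau> * escape_rate \<Omega> R A \<nu>"
    using fb Gf0_eq by (simp add: eps_eq)
  show "Gf \<nu> (t + \<tau> + s) \<le> Gf \<nu> t * (Gf \<nu> s + \<epsilon>)" if "t \<ge> 0" "s \<ge> 0" for t s
  proof -
    have "Gf \<nu> (t + \<tau> + s) \<le> Gf \<nu> t * (Gf \<nu> s + D)"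
      by (rule approx_mult(1)[OF nuP that(1) _ that(2) tvD]) (use tau in auto)
    also have "\<dots> \<le> Gf \<nu> t * (Gf \<nu> s + \<epsilon>)" using De F0 by (intro mult_left_mono) auto
    finally show ?thesis .
  qed
  show "Gf \<nu> (t + \<tau> + s) \<ge> Gf \<nu> t * (Gf \<nu> s - \<epsilon>) - \<epsilon>" if "t \<ge> 0" "s \<ge> 0" for t s
  proof -
    have a: "Gf \<nu> (t + \<tau> + s) \<ge> Gf \<nu> t * (Gf \<nu> s - D) - (Gf \<nu> t - Gf \<nu> (t + \<tau>))"
      by (rule approx_mult(2)[OF nuP that(1) _ that(2) tvD]) (use tau in auto)
    have b: "Gf \<nu> t * (Gf \<nu> s - D) \<ge> Gf \<nu> t * (Gf \<nu> s - \<epsilon>)" using De F0 by (intro mult_left_mono) auto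
    have c: "Gf \<nu> t - Gf \<nu> (t + \<tau>) \<le> \<epsilon>"
      using stat_err[OF that(1), of \<tau>] tau D0 by (simp add: eps_eq)
    show ?thesis using a b c by simp
  qed
  show "Gf lam (t + \<tau> + s) \<le> Gf \<nu> s + \<epsilon>" if "t \<ge> 0" "s \<ge> 0" for t s
  proof -
    have "Gf lam (t + \<tau> + s) \<le> Gf lam t * (Gf \<nu> s + D)"
      by (rule approx_mult(1)[OF lamP that(1) _ that(2) tvD]) (use tau in auto)
    also have "\<dots> \<le> 1 * (Gf \<nu> s + D)" using L1 F0 D0 by (intro mult_right_mono) auto
    finally show ?thesis using De by simp
  qed
  show "Gf lam (t + \<tau> + s) \<ge> Gf \<nu> s - \<epsilon> - 2 * (1 - Gf lam (t + \<tau>))" if t: "t \<ge> 0" and s: "s \<ge> 0" for t s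
  proof -
    have a: "Gf lam (t + \<tau> + s) \<ge> Gf lam t * (Gf \<nu> s - D) - (Gf lam t - Gf lam (t + \<tau>))"
      by (rule approx_mult(2)[OF lamP t _ s tvD]) (use tau in auto)
    have mono: "Gf lam (t + \<tau>) \<le> Gf lam t" using Gf_decr[OF lamP] t tau by (auto simp: decr_def)
    have g1: "Gf lam t \<le> 1" by (rule L1)
    have "Gf lam t * (Gf \<nu> s - D) = (Gf \<nu> s - D) - (1 - Gf lam t) * (Gf \<nu> s - D)" by (simp add: algebra_simps)
    moreover have "(1 - Gf lam t) * (Gf \<nu> s - D) \<le> (1 - Gf lam t) * 1"
      using g1 F1[of s] D0 by (intro mult_left_mono) auto
    ultimately have b: "Gf lam t * (Gf \<nu> s - D) \<ge> Gf \<nu> s - D - (1 - Gf lam t)" by simp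
    show ?thesis using a b mono De L1[of "t + \<tau>"] by simp
  qed
qed

end

theorem corollary3p6:
  fixes \<Omega> :: "nat \<Rightarrow> 'a set" and R :: "nat \<Rightarrow> 'a \<Rightarrow> 'a \<Rightarrow> real"
    and \<nu> \<mu> :: "nat \<Rightarrow> 'a \<Rightarrow> real" and A :: "nat \<Rightarrow> 'a set" and S :: "nat \<Rightarrow> real"
  assumes fin: "\<And>N. finite (\<Omega> N)" and ne: "\<And>N. \<Omega> N \<noteq> {}"
    and rates: "\<And>N x y. x \<in> \<Omega> N \<Longrightarrow> y \<in> \<Omega> N \<Longrightarrow> x \<noteq> y \<Longrightarrow> R N x y \<ge> 0"
    and irr: "\<And>N. irreducible (\<Omega> N) (R N)"
    and stat: "\<And>N. stationary (\<Omega> N) (R N) (\<nu> N)"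
    and A_sub: "\<And>N. A N \<subseteq> \<Omega> N" and A_ne: "\<And>N. A N \<noteq> {}"
    and nuA: "(\<lambda>N. \<Sum>x\<in>A N. \<nu> N x) \<longlonglongrightarrow> 0"
    and mix_rate: "(\<lambda>N. mixing_time (\<Omega> N) (R N) (\<nu> N) * escape_rate (\<Omega> N) (R N) (A N) (\<nu> N))
                     \<longlonglongrightarrow> 0"
    and mu: "\<And>N. prob_on (\<Omega> N) (\<mu> N)"
    and S_pos: "eventually (\<lambda>N. S N > 0) sequentially"
    and S_low: "(\<lambda>N. mixing_time (\<Omega> N) (R N) (\<nu> N) / S N) \<longlonglongrightarrow> 0"
    and S_up: "(\<lambda>N. S N / mean_hit (\<Omega> N) (R N) (A N) (\<nu> N)) \<longlonglongrightarrow> 0"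
    and early: "(\<lambda>N. hit_lt (\<Omega> N) (R N) (A N) (\<mu> N) (S N)) \<longlonglongrightarrow> 0"
  shows "weak_conv
           (\<lambda>N t. hit_cdf (\<Omega> N) (R N) (A N) (\<mu> N) (t * mean_hit (\<Omega> N) (R N) (A N) (\<nu> N)))
           (cdf (density lborel (exponential_density 1)))"
proof -
  have cN: "chain (\<Omega> N) (R N) (\<nu> N) (A N)" for N
    by unfold_locales (use fin rates irr stat A_sub A_ne in auto)
  define mt where "mt N = mixing_time (\<Omega> N) (R N) (\<nu> N)" for N
  define r where "r N = escape_rate (\<Omega> N) (R N) (A N) (\<nu> N)" for N
  define T where "T N = mean_hit (\<Omega> N) (R N) (A N) (\<nu> N)" for N
  define F where "F N t = chain.Gf (\<Omega> N) (R N) (A N) (\<nu> N) t" for N t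
  define G where "G N t = chain.Gf (\<Omega> N) (R N) (A N) (\<mu> N) t" for N t
  define \<eta> where "\<eta> N = hit_lt (\<Omega> N) (R N) (A N) (\<mu> N) (S N)" for N
  have r0: "r N \<ge> 0" for N using chain.rate_nonneg[OF cN] by (simp add: r_def)
  have mt0: "mt N \<ge> 0" for N using chain.mt_nonneg[OF cN ne] by (simp add: mt_def)
  have inv0: "(\<lambda>N. 1 / real (Suc N)) \<longlonglongrightarrow> 0"
    using LIMSEQ_inverse_real_of_nat by (simp add: inverse_eq_divide)
  define e where "e N = (if S N > 0 then min (S N) (1 / (1 + r N)) / real (Suc N) else 1)" for N
  have e0: "e N > 0" for N
  proof -
    have "1 / (1 + r N) > 0" using r0[of N] by simp
    then show ?thesis unfolding e_def by auto
  qed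
  have "\<forall>N. \<exists>t. t \<in> chain.mixset (\<Omega> N) (R N) (\<nu> N) \<and> t < mt N + e N"
  proof
    fix N
    show "\<exists>t. t \<in> chain.mixset (\<Omega> N) (R N) (\<nu> N) \<and> t < mt N + e N"
      using chain.mt_approx[OF cN[of N] ne[of N] e0[of N]] unfolding mt_def by blast
  qed
  then obtain tt where tt: "\<And>N. tt N \<in> chain.mixset (\<Omega> N) (R N) (\<nu> N)" and ttl: "\<And>N. tt N < mt N + e N"
    by metis
  have tt0: "tt N > 0" for N using tt[of N] chain.mixset_def[OF cN] by auto
  have ttS: "(\<lambda>N. tt N / S N) \<longlonglongrightarrow> 0"
  proof (rule sandwich0)
    show "eventually (\<lambda>N. 0 \<le> tt N / S N \<and> tt N / S N \<le> mt N / S N + 1 / real (Suc N)) sequentially"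
      using S_pos
    proof eventually_elim
      case (elim N)
      have "tt N / S N \<le> (mt N + e N) / S N" using ttl[of N] elim by (intro divide_right_mono) auto
      also have "\<dots> = mt N / S N + e N / S N" by (simp add: add_divide_distrib)
      also have "e N / S N \<le> 1 / real (Suc N)"
      proof -
        have "e N = min (S N) (1 / (1 + r N)) / real (Suc N)" using elim by (simp add: e_def)
        also have "\<dots> \<le> S N / real (Suc N)" by (intro divide_right_mono) auto
        finally have "e N \<le> S N / real (Suc N)" .
        then have "e N / S N \<le> (S N / real (Suc N)) / S N" using elim by (intro divide_right_mono) auto
        also have "\<dots> = 1 / real (Suc N)" using elim by simp
        finally show ?thesis .
      qed
      finally show ?case using tt0[of N] elim by simp
    qed
    show "(\<lambda>N. mt N / S N + 1 / real (Suc N)) \<longlonglongrightarrow> 0"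
      using tendsto_add[OF S_low inv0] by (simp add: mt_def)
  qed
  have ttr: "(\<lambda>N. tt N * r N) \<longlonglongrightarrow> 0"
  proof (rule sandwich0)
    show "eventually (\<lambda>N. 0 \<le> tt N * r N \<and> tt N * r N \<le> mt N * r N + 1 / real (Suc N)) sequentially"
      using S_pos
    proof eventually_elim
      case (elim N)
      have "tt N * r N \<le> (mt N + e N) * r N" using ttl[of N] r0[of N] by (intro mult_right_mono) auto
      also have "\<dots> = mt N * r N + e N * r N" by (simp add: algebra_simps)
      also have "e N * r N \<le> 1 / real (Suc N)"
      proof -
        have "e N = min (S N) (1 / (1 + r N)) / real (Suc N)" using elim by (simp add: e_def)
        also have "\<dots> \<le> (1 / (1 + r N)) / real (Suc N)" by (intro divide_right_mono) auto
        finally have "e N \<le> (1 / (1 + r N)) / real (Suc N)" .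
        then have "e N * r N \<le> (1 / (1 + r N)) / real (Suc N) * r N" using r0[of N] by (intro mult_right_mono) auto
        also have "\<dots> = (r N / (1 + r N)) / real (Suc N)" by simp
        also have "\<dots> \<le> 1 / real (Suc N)" using r0[of N] by (intro divide_right_mono) auto
        finally show ?thesis .
      qed
      finally show ?case using tt0[of N] r0[of N] by simp
    qed
    show "(\<lambda>N. mt N * r N + 1 / real (Suc N)) \<longlonglongrightarrow> 0"
      using tendsto_add[OF mix_rate inv0] by (simp add: mt_def r_def)
  qed
  define a where "a N = tt N / S N + tt N * r N + 1 / real (Suc N)" for N
  have a_lim: "a \<longlonglongrightarrow> 0" unfolding a_def using tendsto_add[OF tendsto_add[OF ttS ttr] inv0] by simp
  have a_pos: "eventually (\<lambda>N. a N > 0) sequentially"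
    using S_pos
  proof eventually_elim
    case (elim N)
    have "tt N / S N \<ge> 0" "tt N * r N \<ge> 0" using tt0[of N] r0[of N] elim by auto
    then show ?case by (simp add: a_def add_nonneg_pos)
  qed
  have sa_lim: "(\<lambda>N. sqrt (a N) + a N) \<longlonglongrightarrow> 0"
    using tendsto_add[OF tendsto_real_sqrt[OF a_lim] a_lim] by simp
  define k where "k N = nat \<lfloor>1 / sqrt (a N)\<rfloor>" for N
  define \<tau> where "\<tau> N = real (Suc (k N)) * tt N" for N
  define D where "D N = (1/2::real) ^ (k N + 2)" for N
  define \<epsilon> where "\<epsilon> N = (1/2::real) ^ (k N + 2) + (1 - F N (real (Suc (k N)) * tt N))" for N
  note pk = chain.package[OF cN tt mu]
  have tau_pos: "\<tau> N > 0" for N unfolding \<tau>_def by (rule pk(1))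
  have D0: "D N \<ge> 0" for N unfolding D_def by (rule pk(2))
  have De: "D N \<le> \<epsilon> N" for N unfolding D_def \<epsilon>_def F_def by (rule pk(3))
  have eps_le: "\<epsilon> N \<le> D N + (\<Sum>x\<in>A N. \<nu> N x) + \<tau> N * r N" for N
    unfolding D_def \<epsilon>_def F_def \<tau>_def r_def by (rule pk(4))
  have Fup: "F N (t + \<tau> N + s) \<le> F N t * (F N s + \<epsilon> N)" if "t \<ge> 0" "s \<ge> 0" for N t s
    unfolding F_def \<tau>_def \<epsilon>_def by (rule pk(5)[OF that])
  have Flow: "F N (t + \<tau> N + s) \<ge> F N t * (F N s - \<epsilon> N) - \<epsilon> N" if "t \<ge> 0" "s \<ge> 0" for N t s
    unfolding F_def \<tau>_def \<epsilon>_def by (rule pk(6)[OF that])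
  have Gup: "G N (t + \<tau> N + s) \<le> F N s + \<epsilon> N" if "t \<ge> 0" "s \<ge> 0" for N t s
    unfolding G_def F_def \<tau>_def \<epsilon>_def by (rule pk(7)[OF that])
  have Glow: "G N (t + \<tau> N + s) \<ge> F N s - \<epsilon> N - 2 * (1 - G N (t + \<tau> N))" if "t \<ge> 0" "s \<ge> 0" for N t s
    unfolding G_def F_def \<tau>_def \<epsilon>_def by (rule pk(8)[OF that])
  have nuP: "\<And>N x. x \<in> \<Omega> N \<Longrightarrow> \<nu> N x \<ge> 0" using chain.nu_nonneg[OF cN] by blast
  have muP: "\<And>N x. x \<in> \<Omega> N \<Longrightarrow> \<mu> N x \<ge> 0" using mu by (simp add: prob_on_def)
  have F1: "F N t \<le> 1" for N t unfolding F_def by (rule chain.Gf_le1[OF cN chain.nu_prob[OF cN]])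
  have Fnn: "F N t \<ge> 0" for N t unfolding F_def by (rule chain.Gf_nonneg[OF cN nuP])
  have G1: "G N t \<le> 1" for N t unfolding G_def by (rule chain.Gf_le1[OF cN mu])
  have Gnn: "G N t \<ge> 0" for N t unfolding G_def by (rule chain.Gf_nonneg[OF cN muP])
  have Fdec: "decr (F N)" for N unfolding F_def by (rule chain.Gf_decr[OF cN nuP])
  have Gdec: "decr (G N)" for N unfolding G_def by (rule chain.Gf_decr[OF cN muP])
  have Fint: "F N integrable_on {0..}" for N unfolding F_def by (rule chain.Gf_integrable[OF cN])
  have Tint: "T N = integral {0..} (F N)" for N unfolding T_def F_def by (rule chain.mean_eq[OF cN])
  have F0: "(\<lambda>N. F N 0) \<longlonglongrightarrow> 1"
  proof -
    have "F N 0 = 1 - (\<Sum>x\<in>A N. \<nu> N x)" for N unfolding F_def by (rule chain.Gf0_eq[OF cN])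
    then show ?thesis using tendsto_diff[OF tendsto_const nuA, of 1] by simp
  qed
  have kbounds: "eventually (\<lambda>N. (real (k N) + 1) * a N \<le> sqrt (a N) + a N \<and> 1 / (real (k N) + 1) \<le> sqrt (a N)) sequentially"
    using a_pos by eventually_elim (use sqrt_choice in \<open>auto simp: k_def\<close>)
  have tauS: "(\<lambda>N. \<tau> N / S N) \<longlonglongrightarrow> 0"
  proof (rule sandwich0[OF _ sa_lim])
    show "eventually (\<lambda>N. 0 \<le> \<tau> N / S N \<and> \<tau> N / S N \<le> sqrt (a N) + a N) sequentially"
      using S_pos kbounds
    proof eventually_elim
      case (elim N)
      have h1: "tt N / S N \<le> a N" using tt0[of N] r0[of N] elim by (simp add: a_def)
      have h2: "\<tau> N / S N = (real (k N) + 1) * (tt N / S N)" unfolding \<tau>_def by simp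
      have "\<tau> N / S N \<le> (real (k N) + 1) * a N"
        unfolding h2 by (rule mult_left_mono[OF h1]) simp
      then show ?case using elim tau_pos[of N] by simp
    qed
  qed
  have taur: "(\<lambda>N. \<tau> N * r N) \<longlonglongrightarrow> 0"
  proof (rule sandwich0[OF _ sa_lim])
    show "eventually (\<lambda>N. 0 \<le> \<tau> N * r N \<and> \<tau> N * r N \<le> sqrt (a N) + a N) sequentially"
      using S_pos kbounds
    proof eventually_elim
      case (elim N)
      have h1: "tt N * r N \<le> a N" using tt0[of N] r0[of N] elim by (simp add: a_def)
      have h2: "\<tau> N * r N = (real (k N) + 1) * (tt N * r N)" unfolding \<tau>_def by simp
      have "\<tau> N * r N \<le> (real (k N) + 1) * a N"
        unfolding h2 by (rule mult_left_mono[OF h1]) simp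
      then show ?case using elim tau_pos[of N] r0[of N] by simp
    qed
  qed
  have Dl: "D \<longlonglongrightarrow> 0"
  proof (rule sandwich0[OF _ tendsto_real_sqrt[OF a_lim, simplified]])
    show "eventually (\<lambda>N. 0 \<le> D N \<and> D N \<le> sqrt (a N)) sequentially"
      using kbounds
    proof eventually_elim
      case (elim N)
      then show ?case using half_pow[of "k N"] D0[of N] unfolding D_def by linarith
    qed
  qed
  have epsl: "\<epsilon> \<longlonglongrightarrow> 0"
  proof (rule sandwich0)
    show "eventually (\<lambda>N. 0 \<le> \<epsilon> N \<and> \<epsilon> N \<le> D N + (\<Sum>x\<in>A N. \<nu> N x) + \<tau> N * r N) sequentially"
      using eps_le D0 De by (intro always_eventually) (meson order_trans)
    show "(\<lambda>N. D N + (\<Sum>x\<in>A N. \<nu> N x) + \<tau> N * r N) \<longlonglongrightarrow> 0"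
      using tendsto_add[OF tendsto_add[OF Dl nuA] taur] by simp
  qed
  have eps0: "\<epsilon> N \<ge> 0" for N using D0[of N] De[of N] by simp
  have Ftau: "F N (\<tau> N) \<ge> 1 - \<epsilon> N" for N
    using D0[of N] unfolding \<epsilon>_def \<tau>_def by simp
  have Tpos: "eventually (\<lambda>N. T N > 0) sequentially"
  proof -
    have "eventually (\<lambda>N. \<epsilon> N < 1/2) sequentially" using epsl by (intro order_tendstoD) auto
    then show ?thesis
    proof eventually_elim
      case (elim N)
      have Fpos: "F N (\<tau> N) > 0" using Ftau[of N] elim by simp
      have "integral {0..0 + \<tau> N} (F N) \<ge> \<tau> N * F N (0 + \<tau> N)"
        by (rule int_piece(2)[OF Fdec]) (use tau_pos[of N] in auto)
      moreover have "integral {0..\<tau> N} (F N) \<le> integral {0..} (F N)"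
        by (rule integral_subset_le[OF _ decr_integrable[OF Fdec, where a=0] Fint]) (use Fnn in auto)
      moreover have "\<tau> N * F N (\<tau> N) > 0" using tau_pos[of N] Fpos by simp
      ultimately show ?case using Tint[of N] by simp
    qed
  qed
  have tauT: "(\<lambda>N. \<tau> N / T N) \<longlonglongrightarrow> 0"
  proof -
    have lim: "(\<lambda>N. (\<tau> N / S N) * (S N / T N)) \<longlonglongrightarrow> 0 * 0"
      using tendsto_mult[OF tauS S_up] by (simp add: T_def)
    have ev: "eventually (\<lambda>N. (\<tau> N / S N) * (S N / T N) = \<tau> N / T N) sequentially"
      using S_pos
    proof eventually_elim
      case (elim N)
      show ?case
      proof (cases "T N = 0")
        case True then show ?thesis by simp
      next
        case False then show ?thesis using elim by (simp add: field_simps)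
      qed
    qed
    show ?thesis using Lim_transform_eventually[OF lim ev] by simp
  qed
  have Fconv: "(\<lambda>N. F N (y * T N)) \<longlonglongrightarrow> exp (- y)" if y: "y > 0" for y
  proof (rule expo_core[where \<tau>=\<tau> and \<epsilon>=\<epsilon>])
    show "decr (F N)" for N by (rule Fdec)
    show "F N t \<ge> 0" for N t by (rule Fnn)
    show "F N t \<le> 1" for N t by (rule F1)
    show "F N (t + \<tau> N + s) \<le> F N t * (F N s + \<epsilon> N)" if "t \<ge> 0" "s \<ge> 0" for N t s by (rule Fup[OF that])
    show "F N (t + \<tau> N + s) \<ge> F N t * (F N s - \<epsilon> N) - \<epsilon> N" if "t \<ge> 0" "s \<ge> 0" for N t s by (rule Flow[OF that])
    show "\<epsilon> N \<ge> 0" for N by (rule eps0)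
    show "\<tau> N \<ge> 0" for N using tau_pos[of N] by simp
  qed (use Fint Tint F0 epsl tauT Tpos y in auto)
  have etal: "\<eta> \<longlonglongrightarrow> 0" using early by (simp add: \<eta>_def[abs_def])
  have hcdf: "hit_cdf (\<Omega> N) (R N) (A N) (\<mu> N) t = 1 - G N t" for N t
    unfolding G_def by (rule chain.hit_cdf_eq[OF cN mu])
  have hlt: "1 - G N t \<le> \<eta> N" if "t < S N" for N t
  proof -
    have bdd: "bdd_above ((\<lambda>t. hit_cdf (\<Omega> N) (R N) (A N) (\<mu> N) t) ` {..<S N})"
      by (rule bdd_aboveI[of _ 1]) (auto simp: hcdf Gnn)
    have "hit_cdf (\<Omega> N) (R N) (A N) (\<mu> N) t \<le> \<eta> N"
      unfolding \<eta>_def hit_lt_def by (rule cSUP_upper[OF _ bdd]) (use that in auto)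
    then show ?thesis by (simp add: hcdf)
  qed
  have Gconv: "(\<lambda>N. G N (y * T N)) \<longlonglongrightarrow> exp (- y)" if y: "y > 0" for y
  proof (rule tendstoI)
    fix \<gamma> :: real assume g: "\<gamma> > 0"
    define zj where "zj j = y / real (j + 2)" for j :: nat
    have zj0: "zj j > 0" for j using y by (simp add: zj_def)
    have zjy: "zj j < y" for j
    proof -
      have "y / real (j + 2) < y / 1" using y by (intro divide_strict_left_mono) auto
      then show ?thesis by (simp add: zj_def)
    qed
    have zjl: "zj \<longlonglongrightarrow> 0" unfolding zj_def
      by (intro tendsto_divide_0[OF tendsto_const] filterlim_at_top_imp_at_infinity
          filterlim_real_sequentially[THEN filterlim_compose] filterlim_add_const_nat_at_top)
    have l1: "(\<lambda>j. exp (- (y - zj j))) \<longlonglongrightarrow> exp (- (y - 0))" using zjl by (intro tendsto_intros)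
    have l2: "(\<lambda>j. exp (- (y + zj j))) \<longlonglongrightarrow> exp (- (y + 0))" using zjl by (intro tendsto_intros)
    have "eventually (\<lambda>j. exp (- (y - zj j)) < exp (- y) + \<gamma>/2 \<and> exp (- (y + zj j)) > exp (- y) - \<gamma>/2) sequentially"
      using order_tendstoD(2)[OF l1, of "exp (- y) + \<gamma>/2"] order_tendstoD(1)[OF l2, of "exp (- y) - \<gamma>/2"] g
      by (auto intro: eventually_conj)
    then obtain j where j1: "exp (- (y - zj j)) < exp (- y) + \<gamma>/2" and j2: "exp (- (y + zj j)) > exp (- y) - \<gamma>/2"
      using eventually_happens'[OF sequentially_bot] by blast
    define \<zeta> where "\<zeta> = zj j"
    have z0: "\<zeta> > 0" and zy: "\<zeta> < y" using zj0 zjy by (auto simp: \<zeta>_def)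
    have j1': "exp (- (y - \<zeta>)) < exp (- y) + \<gamma>/2" unfolding \<zeta>_def by (rule j1)
    have j2': "exp (- (y + \<zeta>)) > exp (- y) - \<gamma>/2" unfolding \<zeta>_def by (rule j2)
    have c1: "eventually (\<lambda>N. F N ((y - \<zeta>) * T N) < exp (- (y - \<zeta>)) + \<gamma>/4) sequentially"
      using Fconv[of "y - \<zeta>"] zy g by (intro order_tendstoD) auto
    have c2: "eventually (\<lambda>N. F N ((y + \<zeta>) * T N) > exp (- (y + \<zeta>)) - \<gamma>/4) sequentially"
      using Fconv[of "y + \<zeta>"] y z0 g by (intro order_tendstoD) auto
    have c3: "eventually (\<lambda>N. \<epsilon> N < \<gamma>/8) sequentially" using epsl g by (intro order_tendstoD) auto
    have c4: "eventually (\<lambda>N. \<eta> N < \<gamma>/16) sequentially" using etal g by (intro order_tendstoD) auto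
    have c5: "eventually (\<lambda>N. S N / T N < \<zeta>) sequentially" using S_up z0 by (intro order_tendstoD) (auto simp: T_def)
    have c6: "eventually (\<lambda>N. \<tau> N / T N < \<zeta>) sequentially" using tauT z0 by (intro order_tendstoD) auto
    have c7: "eventually (\<lambda>N. \<tau> N / S N < 1/2) sequentially" using tauS by (intro order_tendstoD) auto
    show "eventually (\<lambda>N. dist (G N (y * T N)) (exp (- y)) < \<gamma>) sequentially"
      using c1 c2 c3 c4 c5 c6 c7 S_pos Tpos
    proof eventually_elim
      case (elim N)
      have Sp: "S N > 0" and Tp: "T N > 0" using elim by auto
      have ST: "S N < \<zeta> * T N" using elim(5) Tp by (simp add: field_simps)
      have tT: "\<tau> N < \<zeta> * T N" using elim(6) Tp by (simp add: field_simps)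
      have tS: "2 * \<tau> N < S N" using elim(7) Sp by (simp add: field_simps)
      have tp: "\<tau> N > 0" by (rule tau_pos)
      define s where "s = y * T N - S N + \<tau> N"
      define t0 where "t0 = S N - 2 * \<tau> N"
      have t00: "t0 \<ge> 0" using tS by (simp add: t0_def)
      have s_low: "s \<ge> (y - \<zeta>) * T N" using ST tp by (simp add: s_def algebra_simps)
      have s_up: "s \<le> (y + \<zeta>) * T N" using tT Sp by (simp add: s_def algebra_simps)
      have s0: "s \<ge> 0" using s_low zy Tp by (smt (verit) mult_pos_pos)
      have yT: "y * T N = t0 + \<tau> N + s" by (simp add: s_def t0_def)
      have up: "G N (y * T N) \<le> F N s + \<epsilon> N" unfolding yT by (rule Gup[OF t00 s0])
      have low: "G N (y * T N) \<ge> F N s - \<epsilon> N - 2 * (1 - G N (t0 + \<tau> N))" unfolding yT by (rule Glow[OF t00 s0])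
      have eta: "1 - G N (t0 + \<tau> N) \<le> \<eta> N" by (rule hlt) (use tp in \<open>simp add: t0_def\<close>)
      have Fs1: "F N s \<le> F N ((y - \<zeta>) * T N)"
        by (rule decrD[OF Fdec _ s_low]) (use zy Tp in simp)
      have Fs2: "F N s \<ge> F N ((y + \<zeta>) * T N)"
        by (rule decrD[OF Fdec s0 s_up])
      have "G N (y * T N) < exp (- y) + \<gamma>"
        using up Fs1 elim(1) elim(3) j1' g by linarith
      moreover have "G N (y * T N) > exp (- y) - \<gamma>"
        using low eta Fs2 elim(2) elim(3) elim(4) j2' g by argo
      ultimately show ?case by (simp add: dist_real_def abs_less_iff)
    qed
  qed
  show ?thesis
    unfolding weak_conv_def
  proof (intro allI impI)
    fix x :: real
    show "(\<lambda>N. hit_cdf (\<Omega> N) (R N) (A N) (\<mu> N) (x * mean_hit (\<Omega> N) (R N) (A N) (\<nu> N)))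
        \<longlonglongrightarrow> cdf (density lborel (exponential_density 1)) x"
    proof (cases "x > 0")
      case True
      have "(\<lambda>N. 1 - G N (x * T N)) \<longlonglongrightarrow> 1 - exp (- x)"
        using Gconv[OF True] by (intro tendsto_intros)
      then show ?thesis using True by (simp add: cdf_exp1 hcdf T_def)
    next
      case False
      show ?thesis
      proof (cases "x = 0")
        case True
        have "(\<lambda>N. 1 - G N 0) \<longlonglongrightarrow> 0"
        proof (rule sandwich0[OF _ etal])
          show "eventually (\<lambda>N. 0 \<le> 1 - G N 0 \<and> 1 - G N 0 \<le> \<eta> N) sequentially"
            using S_pos by eventually_elim (use G1 hlt in auto)
        qed
        then show ?thesis using True by (simp add: cdf_exp1 hcdf)
      next
        case False
        then have xn: "x < 0" using \<open>\<not> x > 0\<close> by simp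
        have "eventually (\<lambda>N. hit_cdf (\<Omega> N) (R N) (A N) (\<mu> N) (x * T N) = 0) sequentially"
          using Tpos
        proof eventually_elim
          case (elim N)
          then have "x * T N < 0" using xn by (simp add: mult_neg_pos)
          then show ?case by (simp add: hit_cdf_def surv_def)
        qed
        then have "(\<lambda>N. hit_cdf (\<Omega> N) (R N) (A N) (\<mu> N) (x * T N)) \<longlonglongrightarrow> 0"
          by (rule tendsto_eventually)
        then show ?thesis using xn by (simp add: cdf_exp1 T_def)
      qed
    qed
  qed
qed

end
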